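(* The family $\mathcal{P}^+_{gd}$ is a cofinal subfamily of $\mathcal{P}^+$ (every element of $\mathcal{P}^+$ is extended by some element of $\mathcal{P}^+_{gd}$) and has the amalgamation property: for all $p_0,p_1,p_2\in\mathcal{P}^+_{gd}$ with $p_0\subseteq p_1$ and $p_0\subseteq p_2$ there exist $p_3\in\mathcal{P}^+_{gd}$ and $\alpha\in\mathrm{Aut}(\mathbb{Q},<)$ fixing $\mathrm{Dom}(p_0)\cup\mathrm{Rng}(p_0)$ pointwise such that $p_1\subseteq p_3$ and $\alpha(p_2)\subseteq p_3$. The same holds for $\mathcal{P}^-_{gd}$ and $\mathcal{P}^-$.
   Context: $\mathcal{P}$ is the set of finite partial isomorphisms of $(\mathbb{Q},<)$ (order-preserving bijections between finite subsets), ordered by extension $\subseteq$; for $\alpha\in\mathrm{Aut}(\mathbb{Q},<)$, $\alpha(p)$ has graph $\{(\alpha(x),\alpha(y)):(x,y)\in\mathrm{Graph}(p)\}$. For $a\in\mathrm{Dom}(p)\cup\mathrm{Rng}(p)$, the parity $\wp_p(a)$ is the sign ($+,0,-$) of $p(a)-a$ if $a\in\mathrm{Dom}(p)$, or of $a-p^{-1}(a)$ if $a\in\mathrm{Rng}(p)$. Elements $a,b\in\mathbb{Q}$ are $p$-related if $a=b$, or if $\wp_p(a)=+$ or $\wp_p(b)=+$ and one of $a\le b\le p(a)$, $b\le a\le p(b)$, $p^{-1}(a)\le b\le a$, $p^{-1}(b)\le a\le b$ holds, or if $\wp_p(a)=-$ or $\wp_p(b)=-$ and one of $a\le b\le p^{-1}(a)$,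 $b\le a\le p^{-1}(b)$, $p(a)\le b\le a$, $p(b)\le a\le b$ holds (when defined). The $\sim_p$-classes of the equivalence relation generated by $p$-relatedness are $p$-orbitals; those meeting $\mathrm{Dom}(p)\cup\mathrm{Rng}(p)$ are colored $p$-orbitals, with parity given by $\wp_p$. $\mathcal{P}^+$ ($\mathcal{P}^-$) is the set of $p\in\mathcal{P}$ all of whose colored $p$-orbitals have parity $+$ (resp. $-$). A bad pair of $p$ is a pair $a<a'$ of elements of $\mathrm{Dom}(p)\cup\mathrm{Rng}(p)$ such that either the colored $p$-orbitals of $a,a'$ (possibly equal) and all colored $p$-orbitals between them have parity $+$ and $p(a)$ and $p^{-1}(a')$ are undefined, or they all have parity $-$ and $p(a')$ and $p^{-1}(a)$ are undefined. $\mathcal{P}^+_{gd}$ ($\mathcal{P}^-_{gd}$) is the set of $p\in\mathcal{P}^+$ (resp. $\mathcal{P}^-$) with a single colored $p$-orbital and no bad pairs. *)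

theory Defs
  imports Main "HOL.Rat"
begin

text \<open>Extension of partial isomorphisms is map inclusion (graph inclusion).\<close>

type_synonym pmap = "rat \<rightharpoonup> rat"

definition fin_piso :: "pmap \<Rightarrow> bool" where
  "fin_piso p \<longleftrightarrow> finite (dom p) \<and>
     (\<forall>x\<in>dom p. \<forall>y\<in>dom p. x < y \<longrightarrow> the (p x) < the (p y))"

definition is_aut :: "(rat \<Rightarrow> rat) \<Rightarrow> bool" where
  "is_aut \<alpha> \<longleftrightarrow> bij \<alpha> \<and> strict_mono \<alpha>"

text \<open>alpha(p): graph {(alpha x, alpha y) | (x,y) in graph p}.\<close>
definition aut_apply :: "(rat \<Rightarrow> rat) \<Rightarrow> pmap \<Rightarrow> pmap" where
  "aut_apply \<alpha> p = (\<lambda>z. map_option \<alpha> (p (inv \<alpha> z)))"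

definition DR :: "pmap \<Rightarrow> rat set" where
  "DR p = dom p \<union> ran p"

text \<open>p^{-1}(b), meaningful for b in Rng(p).\<close>
definition pinv :: "pmap \<Rightarrow> rat \<Rightarrow> rat" where
  "pinv p b = (THE a. p a = Some b)"

text \<open>Parity (+,0,- encoded as 1,0,-1), meaningful for a in Dom(p) \<union> Rng(p).\<close>
definition parity :: "pmap \<Rightarrow> rat \<Rightarrow> rat" where
  "parity p a = (if a \<in> dom p then sgn (the (p a) - a) else sgn (a - pinv p a))"

definition has_par :: "pmap \<Rightarrow> rat \<Rightarrow> rat \<Rightarrow> bool" where
  "has_par p s a \<longleftrightarrow> a \<in> DR p \<and> parity p a = s"

definition p_related :: "pmap \<Rightarrow> rat \<Rightarrow> rat \<Rightarrow> bool" where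
  "p_related p a b \<longleftrightarrow> a = b
    \<or> ((has_par p 1 a \<or> has_par p 1 b) \<and>
        ((a \<in> dom p \<and> a \<le> b \<and> b \<le> the (p a)) \<or>
         (b \<in> dom p \<and> b \<le> a \<and> a \<le> the (p b)) \<or>
         (a \<in> ran p \<and> pinv p a \<le> b \<and> b \<le> a) \<or>
         (b \<in> ran p \<and> pinv p b \<le> a \<and> a \<le> b)))
    \<or> ((has_par p (-1) a \<or> has_par p (-1) b) \<and>
        ((a \<in> ran p \<and> a \<le> b \<and> b \<le> pinv p a) \<or>
         (b \<in> ran p \<and> b \<le> a \<and> a \<le> pinv p b) \<or>
         (a \<in> dom p \<and> the (p a) \<le> b \<and> b \<le> a) \<or>
         (b \<in> dom p \<and> the (p b) \<le> a \<and> a \<le> b)))"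

definition orbital :: "pmap \<Rightarrow> rat \<Rightarrow> rat set" where
  "orbital p a = {b. (equivclp (p_related p)) a b}"

definition colored_orbitals :: "pmap \<Rightarrow> rat set set" where
  "colored_orbitals p = {orbital p a | a. a \<in> DR p}"

definition orbital_parity :: "pmap \<Rightarrow> rat set \<Rightarrow> rat \<Rightarrow> bool" where
  "orbital_parity p Ob s \<longleftrightarrow> (\<forall>a\<in>Ob \<inter> DR p. parity p a = s)"

definition Psgn :: "rat \<Rightarrow> pmap set" where
  "Psgn s = {p. fin_piso p \<and> (\<forall>Ob\<in>colored_orbitals p. orbital_parity p Ob s)}"

definition bad_pair :: "pmap \<Rightarrow> rat \<Rightarrow> rat \<Rightarrow> bool" where
  "bad_pair p a a' \<longleftrightarrow> a \<in> DR p \<and> a' \<in> DR p \<and> a < a' \<and>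
    (((\<forall>Ob\<in>colored_orbitals p. (a \<in> Ob \<or> a' \<in> Ob \<or> (\<exists>c\<in>Ob. a \<le> c \<and> c \<le> a'))
          \<longrightarrow> orbital_parity p Ob 1) \<and> a \<notin> dom p \<and> a' \<notin> ran p)
     \<or> ((\<forall>Ob\<in>colored_orbitals p. (a \<in> Ob \<or> a' \<in> Ob \<or> (\<exists>c\<in>Ob. a \<le> c \<and> c \<le> a'))
          \<longrightarrow> orbital_parity p Ob (-1)) \<and> a' \<notin> dom p \<and> a \<notin> ran p))"

definition Pgd :: "rat \<Rightarrow> pmap set" where
  "Pgd s = {p. p \<in> Psgn s \<and> card (colored_orbitals p) = 1 \<and> (\<forall>a a'. \<not> bad_pair p a a')}"

abbreviation "Pplus \<equiv> Psgn 1"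
abbreviation "Pminus \<equiv> Psgn (-1)"
abbreviation "Pplus_gd \<equiv> Pgd 1"
abbreviation "Pminus_gd \<equiv> Pgd (-1)"

definition cofinal_in :: "pmap set \<Rightarrow> pmap set \<Rightarrow> bool" where
  "cofinal_in Q P \<longleftrightarrow> Q \<subseteq> P \<and> (\<forall>p\<in>P. \<exists>q\<in>Q. p \<subseteq>\<^sub>m q)"

definition amalgamation :: "pmap set \<Rightarrow> bool" where
  "amalgamation Q \<longleftrightarrow> (\<forall>p0\<in>Q. \<forall>p1\<in>Q. \<forall>p2\<in>Q. p0 \<subseteq>\<^sub>m p1 \<and> p0 \<subseteq>\<^sub>m p2 \<longrightarrow>
     (\<exists>p3\<in>Q. \<exists>\<alpha>. is_aut \<alpha> \<and> (\<forall>x\<in>DR p0. \<alpha> x = x) \<and>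
        p1 \<subseteq>\<^sub>m p3 \<and> aut_apply \<alpha> p2 \<subseteq>\<^sub>m p3))"

end

theory Submission
  imports Defs
begin


lemma gap:
  fixes A B F :: "rat set"
  assumes "finite A" "finite B" "finite F" "\<forall>a\<in>A. \<forall>b\<in>B. a < b"
  shows "\<exists>z. z \<notin> F \<and> (\<forall>a\<in>A. a < z) \<and> (\<forall>b\<in>B. z < b)"
proof -
  have mb: "\<forall>b\<in>B. Min B \<le> b" and ma: "\<forall>a\<in>A. a \<le> Max A" using assms by auto
  obtain lo hi :: rat where lh: "lo < hi" "\<forall>a\<in>A. a \<le> lo" "\<forall>b\<in>B. hi \<le> b"
  proof (cases "A = {}")
    case True
    show ?thesis
    proof (cases "B = {}")
      case True
      then show ?thesis using \<open>A = {}\<close> that[of 0 1] by auto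
    next
      case False
      show ?thesis by (rule that[of "Min B - 1" "Min B"]) (use \<open>A = {}\<close> mb in \<open>linarith|blast\<close>)+
    qed
  next
    case False
    show ?thesis
    proof (cases "B = {}")
      case True
      show ?thesis by (rule that[of "Max A" "Max A + 1"]) (use \<open>B = {}\<close> ma in \<open>linarith|blast\<close>)+
    next
      case False
      show ?thesis by (rule that[of "Max A" "Min B"]) (use \<open>A \<noteq> {}\<close> False assms mb ma in \<open>simp|blast\<close>)+
    qed
  qed
  have "infinite {lo<..<hi}" using lh(1) by simp
  then have "\<not> ({lo<..<hi} \<subseteq> F)" using assms(3) finite_subset by blast
  then obtain z where "z \<in> {lo<..<hi}" "z \<notin> F" by blast
  then show ?thesis using lh by force
qed

definition incr :: "pmap \<Rightarrow> bool" where
  "incr p \<longleftrightarrow> (\<forall>x\<in>dom p. x < the (p x))"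
definition decr :: "pmap \<Rightarrow> bool" where
  "decr p \<longleftrightarrow> (\<forall>x\<in>dom p. the (p x) < x)"
definition ends :: "pmap \<Rightarrow> rat set" where "ends p = DR p - dom p"
definition starts :: "pmap \<Rightarrow> rat set" where "starts p = DR p - ran p"

definition goodp :: "pmap \<Rightarrow> bool" where
  "goodp p \<longleftrightarrow> fin_piso p \<and> incr p \<and> DR p \<noteq> {} \<and> (\<forall>a\<in>ends p. \<forall>b\<in>starts p. b < a)"
definition goodm :: "pmap \<Rightarrow> bool" where
  "goodm p \<longleftrightarrow> fin_piso p \<and> decr p \<and> DR p \<noteq> {} \<and> (\<forall>a\<in>ends p. \<forall>b\<in>starts p. a < b)"

lemma fin_DR: "fin_piso p \<Longrightarrow> finite (DR p)"
  unfolding fin_piso_def DR_def by (simp add: finite_ran)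

lemma OP: "fin_piso p \<Longrightarrow> p x = Some a \<Longrightarrow> p y = Some b \<Longrightarrow> x < y \<Longrightarrow> a < b"
  unfolding fin_piso_def by (metis domI option.sel)

lemma OP_iff: "fin_piso p \<Longrightarrow> p x = Some a \<Longrightarrow> p y = Some b \<Longrightarrow> (x < y) = (a < b)"
proof
  assume "fin_piso p" "p x = Some a" "p y = Some b" "a < b"
  show "x < y"
  proof (rule ccontr)
    assume "\<not> x < y"
    then have "y < x \<or> y = x" by auto
    then show False
    proof
      assume "y < x" then have "b < a" using OP \<open>fin_piso p\<close> \<open>p x = Some a\<close> \<open>p y = Some b\<close> by blast
      then show False using \<open>a < b\<close> by simp
    next
      assume "y = x" then show False using \<open>a < b\<close> \<open>p x = Some a\<close> \<open>p y = Some b\<close> by simp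
    qed
  qed
qed (rule OP)

lemma OP_inj: "fin_piso p \<Longrightarrow> p x = Some a \<Longrightarrow> p y = Some a \<Longrightarrow> x = y"
  by (metis OP_iff less_irrefl linorder_neq_iff)

lemma pinv_eq: "fin_piso p \<Longrightarrow> p x = Some a \<Longrightarrow> pinv p a = x"
  unfolding pinv_def by (rule the_equality) (auto dest: OP_inj)

lemma pinv_ran: "fin_piso p \<Longrightarrow> a \<in> ran p \<Longrightarrow> p (pinv p a) = Some a"
  unfolding ran_def using pinv_eq by fastforce

lemma ran_mono: "p \<subseteq>\<^sub>m q \<Longrightarrow> ran p \<subseteq> ran q"
  unfolding ran_def map_le_def by (auto, metis domI)

lemma DR_mono: "p \<subseteq>\<^sub>m q \<Longrightarrow> DR p \<subseteq> DR q"
  unfolding DR_def using map_le_implies_dom_le ran_mono by blast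



lemma dom_DR: "x \<in> dom p \<Longrightarrow> x \<in> DR p" unfolding DR_def by auto
lemma ran_DR: "x \<in> ran p \<Longrightarrow> x \<in> DR p" unfolding DR_def by auto

lemma parity_incr:
  assumes "fin_piso p" "incr p" "a \<in> DR p" shows "parity p a = 1"
proof (cases "a \<in> dom p")
  case True
  then show ?thesis using assms(2) unfolding parity_def incr_def by auto
next
  case False
  then have r: "a \<in> ran p" using assms(3) unfolding DR_def by auto
  then have "p (pinv p a) = Some a" using pinv_ran assms(1) by blast
  then have "pinv p a < a" using assms(2) unfolding incr_def by force
  then show ?thesis using False unfolding parity_def by auto
qed

lemma parity_decr:
  assumes "fin_piso p" "decr p" "a \<in> DR p" shows "parity p a = -1"
proof (cases "a \<in> dom p")
  case True
  then show ?thesis using assms(2) unfolding parity_def decr_def by auto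
next
  case False
  then have r: "a \<in> ran p" using assms(3) unfolding DR_def by auto
  then have "p (pinv p a) = Some a" using pinv_ran assms(1) by blast
  then have "a < pinv p a" using assms(2) unfolding decr_def by force
  then show ?thesis using False unfolding parity_def by auto
qed

lemma orbital_self: "a \<in> orbital p a" unfolding orbital_def by simp

lemma orbital_col: "a \<in> DR p \<Longrightarrow> orbital p a \<in> colored_orbitals p"
  unfolding colored_orbitals_def by blast

lemma Psgn_char: "p \<in> Psgn s \<longleftrightarrow> fin_piso p \<and> (\<forall>a\<in>DR p. parity p a = s)"
proof
  assume "p \<in> Psgn s"
  then show "fin_piso p \<and> (\<forall>a\<in>DR p. parity p a = s)"
    unfolding Psgn_def orbital_parity_def using orbital_col orbital_self by blast
next
  assume "fin_piso p \<and> (\<forall>a\<in>DR p. parity p a = s)"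
  then show "p \<in> Psgn s" unfolding Psgn_def orbital_parity_def by blast
qed

lemma Psgn1: "p \<in> Psgn 1 \<longleftrightarrow> fin_piso p \<and> incr p"
proof
  assume a: "p \<in> Psgn 1"
  then have f: "fin_piso p" and pa: "\<forall>a\<in>DR p. parity p a = 1" using Psgn_char by auto
  have "incr p" unfolding incr_def
  proof
    fix x assume "x \<in> dom p"
    then have "parity p x = 1" using pa dom_DR by blast
    then show "x < the (p x)" using \<open>x \<in> dom p\<close> unfolding parity_def by (simp add: sgn_1_pos)
  qed
  then show "fin_piso p \<and> incr p" using f by simp
qed (auto simp: Psgn_char parity_incr)

lemma Psgnm: "p \<in> Psgn (-1) \<longleftrightarrow> fin_piso p \<and> decr p"
proof
  assume a: "p \<in> Psgn (-1)"
  then have f: "fin_piso p" and pa: "\<forall>a\<in>DR p. parity p a = -1" using Psgn_char by auto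
  have "decr p" unfolding decr_def
  proof
    fix x assume "x \<in> dom p"
    then have "parity p x = -1" using pa dom_DR by blast
    then show "the (p x) < x" using \<open>x \<in> dom p\<close> unfolding parity_def by (simp add: sgn_1_neg)
  qed
  then show "fin_piso p \<and> decr p" using f by simp
qed (auto simp: Psgn_char parity_decr)

lemma card_one:
  assumes fin: "finite (DR p)" and ne: "DR p \<noteq> {}"
    and cons: "\<And>x y. x \<in> DR p \<Longrightarrow> y \<in> DR p \<Longrightarrow> x < y \<Longrightarrow> (\<forall>z\<in>DR p. \<not> (x < z \<and> z < y)) \<Longrightarrow> p_related p x y"
  shows "card (colored_orbitals p) = 1"
proof -
  define m where "m = Min (DR p)"
  have mD: "m \<in> DR p" using fin ne m_def by simp
  have key: "\<forall>y. y \<in> DR p \<longrightarrow> card {z\<in>DR p. z < y} = n \<longrightarrow> equivclp (p_related p) m y" for n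
  proof (induction n rule: less_induct)
    case (less n)
    show ?case
    proof (intro allI impI)
      fix y assume y: "y \<in> DR p" "card {z\<in>DR p. z < y} = n"
      show "equivclp (p_related p) m y"
      proof (cases "y = m")
        case True then show ?thesis by simp
      next
        case False
        then have "m < y" using y fin m_def by (simp add: order_less_le)
        define S where "S = {z\<in>DR p. z < y}"
        have Sfin: "finite S" using fin S_def by simp
        have Sne: "S \<noteq> {}" using \<open>m < y\<close> mD S_def by blast
        define x where "x = Max S"
        have xS: "x \<in> S" using Sfin Sne x_def by simp
        then have xD: "x \<in> DR p" and xy: "x < y" using S_def by auto
        have between: "\<forall>z\<in>DR p. \<not> (x < z \<and> z < y)"
        proof (intro ballI notI)
          fix z assume "z \<in> DR p" "x < z \<and> z < y"
          then have "z \<in> S" using S_def by simp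
          then have "z \<le> x" using Sfin x_def by simp
          then show False using \<open>x < z \<and> z < y\<close> by simp
        qed
        have sub: "{z\<in>DR p. z < x} \<subset> S" using xS xy S_def by auto
        then have "card {z\<in>DR p. z < x} < n" using y(2) psubset_card_mono[OF Sfin sub] unfolding S_def by simp
        then have "equivclp (p_related p) m x" using less xD by blast
        moreover have "p_related p x y" using cons xD y(1) xy between by blast
        ultimately show ?thesis by (meson equivclp_trans r_into_equivclp)
      qed
    qed
  qed
  have all: "\<And>y. y \<in> DR p \<Longrightarrow> equivclp (p_related p) m y" using key by blast
  have "colored_orbitals p = {orbital p m}"
  proof
    show "colored_orbitals p \<subseteq> {orbital p m}"
    proof
      fix Oc assume "Oc \<in> colored_orbitals p"
      then obtain a where a: "a \<in> DR p" "Oc = orbital p a" unfolding colored_orbitals_def by blast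
      have e: "equivclp (p_related p) m a" using all a(1) by blast
      have e': "equivclp (p_related p) a m" using e by (rule equivclp_sym)
      have "orbital p a = orbital p m" unfolding orbital_def
      proof (intro Collect_cong iffI)
        fix b assume "equivclp (p_related p) a b" then show "equivclp (p_related p) m b" using e by (rule equivclp_trans[rotated])
      next
        fix b assume "equivclp (p_related p) m b" then show "equivclp (p_related p) a b" using e' by (rule equivclp_trans[rotated])
      qed
      then show "Oc \<in> {orbital p m}" using a by simp
    qed
  next
    show "{orbital p m} \<subseteq> colored_orbitals p" using mD orbital_col by blast
  qed
  then show ?thesis by simp
qed

lemma has_par_I: "a \<in> DR p \<Longrightarrow> parity p a = s \<Longrightarrow> has_par p s a" unfolding has_par_def by simp

lemma consec_plus:
  assumes g: "goodp p" and xD: "x \<in> DR p" and yD: "y \<in> DR p" and xy: "x < y"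
    and btw: "\<forall>z\<in>DR p. \<not> (x < z \<and> z < y)"
  shows "p_related p x y"
proof -
  have f: "fin_piso p" and inc: "incr p" and gd: "\<forall>a\<in>ends p. \<forall>b\<in>starts p. b < a"
    using g unfolding goodp_def by auto
  show ?thesis
  proof (cases "x \<in> dom p")
    case True
    have px: "x < the (p x)" using inc True unfolding incr_def by auto
    have "the (p x) \<in> DR p" using True unfolding DR_def ran_def by auto
    then have "y \<le> the (p x)" using btw px by force
    moreover have "has_par p 1 x" using has_par_I xD parity_incr f inc by blast
    ultimately show ?thesis unfolding p_related_def using True xy by auto
  next
    case False
    show ?thesis
    proof (cases "y \<in> ran p")
      case True
      have pp: "p (pinv p y) = Some y" using pinv_ran f True by blast
      then have lt: "pinv p y < y" using inc unfolding incr_def by force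
      have "pinv p y \<in> DR p" using pp unfolding DR_def by auto
      then have "pinv p y \<le> x" using btw lt by force
      moreover have "has_par p 1 y" using has_par_I yD parity_incr f inc by blast
      ultimately show ?thesis unfolding p_related_def using True xy by auto
    next
      case False
      then have "y \<in> starts p" "x \<in> ends p" using yD xD \<open>x \<notin> dom p\<close> unfolding starts_def ends_def by auto
      then have "y < x" using gd by blast
      then show ?thesis using xy by simp
    qed
  qed
qed

lemma consec_minus:
  assumes g: "goodm p" and xD: "x \<in> DR p" and yD: "y \<in> DR p" and xy: "x < y"
    and btw: "\<forall>z\<in>DR p. \<not> (x < z \<and> z < y)"
  shows "p_related p x y"
proof -
  have f: "fin_piso p" and dec: "decr p" and gd: "\<forall>a\<in>ends p. \<forall>b\<in>starts p. a < b"
    using g unfolding goodm_def by auto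
  show ?thesis
  proof (cases "y \<in> dom p")
    case True
    have py: "the (p y) < y" using dec True unfolding decr_def by auto
    have "the (p y) \<in> DR p" using True unfolding DR_def ran_def by auto
    then have "the (p y) \<le> x" using btw py by force
    moreover have "has_par p (-1) y" using has_par_I yD parity_decr f dec by blast
    ultimately show ?thesis unfolding p_related_def using True xy by auto
  next
    case False
    show ?thesis
    proof (cases "x \<in> ran p")
      case True
      have pp: "p (pinv p x) = Some x" using pinv_ran f True by blast
      then have lt: "x < pinv p x" using dec unfolding decr_def by force
      have "pinv p x \<in> DR p" using pp unfolding DR_def by auto
      then have "y \<le> pinv p x" using btw lt by force
      moreover have "has_par p (-1) x" using has_par_I xD parity_decr f dec by blast
      ultimately show ?thesis unfolding p_related_def using True xy by auto
    next
      case False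
      then have "x \<in> starts p" "y \<in> ends p" using yD xD \<open>y \<notin> dom p\<close> unfolding starts_def ends_def by auto
      then have "y < x" using gd by blast
      then show ?thesis using xy by simp
    qed
  qed
qed

lemma Pgd1: "p \<in> Pgd 1 \<longleftrightarrow> goodp p"
proof
  assume a: "p \<in> Pgd 1"
  then have P: "p \<in> Psgn 1" and c1: "card (colored_orbitals p) = 1" and nb: "\<forall>a a'. \<not> bad_pair p a a'"
    unfolding Pgd_def by auto
  then have f: "fin_piso p" and inc: "incr p" using Psgn1 by auto
  have "colored_orbitals p \<noteq> {}" using c1 by auto
  then have ne: "DR p \<noteq> {}" unfolding colored_orbitals_def by auto
  have gd: "\<forall>a\<in>ends p. \<forall>b\<in>starts p. b < a"
  proof (intro ballI)
    fix a b assume ab: "a \<in> ends p" "b \<in> starts p"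
    show "b < a"
    proof (rule ccontr)
      assume "\<not> b < a"
      moreover have "a \<noteq> b" using ab unfolding ends_def starts_def DR_def by auto
      ultimately have "a < b" by simp
      have "\<forall>Ob\<in>colored_orbitals p. orbital_parity p Ob 1" using P unfolding Psgn_def by auto
      then have "bad_pair p a b" unfolding bad_pair_def using ab \<open>a < b\<close> unfolding ends_def starts_def by auto
      then show False using nb by blast
    qed
  qed
  show "goodp p" unfolding goodp_def using f inc ne gd by auto
next
  assume g: "goodp p"
  then have f: "fin_piso p" and inc: "incr p" and ne: "DR p \<noteq> {}" and gd: "\<forall>a\<in>ends p. \<forall>b\<in>starts p. b < a"
    unfolding goodp_def by auto
  have P: "p \<in> Psgn 1" using Psgn1 f inc by simp
  have c1: "card (colored_orbitals p) = 1"
    using card_one[OF fin_DR[OF f] ne] consec_plus[OF g] by blast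
  have nb: "\<not> bad_pair p a a'" for a a'
  proof
    assume bp: "bad_pair p a a'"
    then have aD: "a \<in> DR p" and aD': "a' \<in> DR p" and lt: "a < a'" unfolding bad_pair_def by auto
    have par: "parity p a = 1" using parity_incr f inc aD by blast
    consider (c1) "a \<notin> dom p" "a' \<notin> ran p"
      | (c2) "\<forall>Ob\<in>colored_orbitals p. (a \<in> Ob \<or> a' \<in> Ob \<or> (\<exists>c\<in>Ob. a \<le> c \<and> c \<le> a')) \<longrightarrow> orbital_parity p Ob (-1)"
      using bp unfolding bad_pair_def by blast
    then show False
    proof cases
      case c1
      then have "a \<in> ends p" "a' \<in> starts p" using aD aD' unfolding ends_def starts_def by auto
      then show False using gd lt by force
    next
      case c2
      then have "orbital_parity p (orbital p a) (-1)" using orbital_col[OF aD] orbital_self by blast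
      then have "parity p a = -1" unfolding orbital_parity_def using orbital_self aD by blast
      then show False using par by simp
    qed
  qed
  show "p \<in> Pgd 1" unfolding Pgd_def using P c1 nb by auto
qed

lemma Pgdm: "p \<in> Pgd (-1) \<longleftrightarrow> goodm p"
proof
  assume a: "p \<in> Pgd (-1)"
  then have P: "p \<in> Psgn (-1)" and c1: "card (colored_orbitals p) = 1" and nb: "\<forall>a a'. \<not> bad_pair p a a'"
    unfolding Pgd_def by auto
  then have f: "fin_piso p" and dec: "decr p" using Psgnm by auto
  have "colored_orbitals p \<noteq> {}" using c1 by auto
  then have ne: "DR p \<noteq> {}" unfolding colored_orbitals_def by auto
  have gd: "\<forall>a\<in>ends p. \<forall>b\<in>starts p. a < b"
  proof (intro ballI)
    fix a b assume ab: "a \<in> ends p" "b \<in> starts p"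
    show "a < b"
    proof (rule ccontr)
      assume "\<not> a < b"
      moreover have "a \<noteq> b" using ab unfolding ends_def starts_def DR_def by auto
      ultimately have "b < a" by simp
      have "\<forall>Ob\<in>colored_orbitals p. orbital_parity p Ob (-1)" using P unfolding Psgn_def by auto
      then have "bad_pair p b a" unfolding bad_pair_def using ab \<open>b < a\<close> unfolding ends_def starts_def by auto
      then show False using nb by blast
    qed
  qed
  show "goodm p" unfolding goodm_def using f dec ne gd by auto
next
  assume g: "goodm p"
  then have f: "fin_piso p" and dec: "decr p" and ne: "DR p \<noteq> {}" and gd: "\<forall>a\<in>ends p. \<forall>b\<in>starts p. a < b"
    unfolding goodm_def by auto
  have P: "p \<in> Psgn (-1)" using Psgnm f dec by simp
  have c1: "card (colored_orbitals p) = 1"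
    using card_one[OF fin_DR[OF f] ne] consec_minus[OF g] by blast
  have nb: "\<not> bad_pair p a a'" for a a'
  proof
    assume bp: "bad_pair p a a'"
    then have aD: "a \<in> DR p" and aD': "a' \<in> DR p" and lt: "a < a'" unfolding bad_pair_def by auto
    have par: "parity p a = -1" using parity_decr f dec aD by blast
    consider (c1) "a' \<notin> dom p" "a \<notin> ran p"
      | (c2) "\<forall>Ob\<in>colored_orbitals p. (a \<in> Ob \<or> a' \<in> Ob \<or> (\<exists>c\<in>Ob. a \<le> c \<and> c \<le> a')) \<longrightarrow> orbital_parity p Ob 1"
      using bp unfolding bad_pair_def by blast
    then show False
    proof cases
      case c1
      then have "a' \<in> ends p" "a \<in> starts p" using aD aD' unfolding ends_def starts_def by auto
      then show False using gd lt by force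
    next
      case c2
      then have "orbital_parity p (orbital p a) 1" using orbital_col[OF aD] orbital_self by blast
      then have "parity p a = 1" unfolding orbital_parity_def using orbital_self aD by blast
      then show False using par by simp
    qed
  qed
  show "p \<in> Pgd (-1)" unfolding Pgd_def using P c1 nb by auto
qed



definition dincr :: "rat \<Rightarrow> pmap \<Rightarrow> bool" where
  "dincr d p \<longleftrightarrow> (\<forall>x\<in>dom p. x + d \<le> the (p x))"

lemma upd_the: "the ((q(a \<mapsto> z)) x) = (if x = a then z else the (q x))" by simp

lemma fwd_one:
  assumes f: "fin_piso q" and di: "dincr d q" and d: "0 < d" and a: "a \<notin> dom q" and F: "finite F"
  shows "\<exists>z. z \<notin> F \<and> a + d < z \<and> fin_piso (q(a \<mapsto> z))"
proof -
  define A where "A = insert (a + d) ((\<lambda>x. the (q x)) ` {x\<in>dom q. x < a})"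
  define B where "B = (\<lambda>x. the (q x)) ` {x\<in>dom q. a < x}"
  have fd: "finite (dom q)" using f unfolding fin_piso_def by simp
  have AB: "\<forall>u\<in>A. \<forall>v\<in>B. u < v"
  proof (intro ballI)
    fix u v assume u: "u \<in> A" and v: "v \<in> B"
    from v obtain y where y: "y \<in> dom q" "a < y" "v = the (q y)" unfolding B_def by auto
    show "u < v"
    proof (cases "u = a + d")
      case True
      then show ?thesis using di y unfolding dincr_def by force
    next
      case False
      then obtain x where x: "x \<in> dom q" "x < a" "u = the (q x)" using u unfolding A_def by auto
      then show ?thesis using f y unfolding fin_piso_def by auto
    qed
  qed
  have fA: "finite A" and fB: "finite B" using fd unfolding A_def B_def by auto
  obtain z where z: "z \<notin> F" "\<forall>u\<in>A. u < z" "\<forall>v\<in>B. z < v"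
    using gap[OF fA fB F AB] by blast
  have "fin_piso (q(a \<mapsto> z))"
    unfolding fin_piso_def
  proof (intro conjI ballI impI)
    show "finite (dom (q(a \<mapsto> z)))" using fd by simp
  next
    fix x y assume x: "x \<in> dom (q(a \<mapsto> z))" and y: "y \<in> dom (q(a \<mapsto> z))" and xy: "x < y"
    show "the ((q(a \<mapsto> z)) x) < the ((q(a \<mapsto> z)) y)"
    proof (cases "x = a")
      case True
      then have "y \<noteq> a" "y \<in> dom q" using xy y by auto
      then have "the (q y) \<in> B" unfolding B_def using True xy by auto
      then show ?thesis using z True \<open>y \<noteq> a\<close> by simp
    next
      case False
      then have xq: "x \<in> dom q" using x by auto
      show ?thesis
      proof (cases "y = a")
        case True
        then have "the (q x) \<in> A" unfolding A_def using xq xy by auto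
        then show ?thesis using z True False by simp
      next
        case False
        then have "y \<in> dom q" using y by auto
        then show ?thesis using f xq xy False \<open>x \<noteq> a\<close> unfolding fin_piso_def by auto
      qed
    qed
  qed
  moreover have "a + d < z" using z(2) unfolding A_def by auto
  ultimately show ?thesis using z(1) by blast
qed

lemma bwd_one:
  assumes f: "fin_piso q" and di: "dincr d q" and d: "0 < d" and s: "s \<notin> ran q" and F: "finite F"
  shows "\<exists>w. w \<notin> F \<and> w \<notin> dom q \<and> w + d < s \<and> fin_piso (q(w \<mapsto> s))"
proof -
  define A where "A = {x\<in>dom q. the (q x) < s}"
  define B where "B = insert (s - d) {x\<in>dom q. s < the (q x)}"
  have fd: "finite (dom q)" using f unfolding fin_piso_def by simp
  have ne: "x \<in> dom q \<Longrightarrow> the (q x) \<noteq> s" for x using s unfolding ran_def by auto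
  have AB: "\<forall>u\<in>A. \<forall>v\<in>B. u < v"
  proof (intro ballI)
    fix u v assume u: "u \<in> A" and v: "v \<in> B"
    from u have u': "u \<in> dom q" "the (q u) < s" unfolding A_def by auto
    show "u < v"
    proof (cases "v = s - d")
      case True
      then show ?thesis using di u' unfolding dincr_def by force
    next
      case False
      then have v': "v \<in> dom q" "s < the (q v)" using v unfolding B_def by auto
      then have "the (q u) < the (q v)" using u' by simp
      then show ?thesis using OP_iff[OF f, of u "the (q u)" v "the (q v)"] u'(1) v'(1) by auto
    qed
  qed
  have fA: "finite A" and fB: "finite B" and fF: "finite (F \<union> dom q)" using fd F unfolding A_def B_def by auto
  obtain w where w: "w \<notin> F \<union> dom q" "\<forall>u\<in>A. u < w" "\<forall>v\<in>B. w < v"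
    using gap[OF fA fB fF AB] by blast
  have "fin_piso (q(w \<mapsto> s))"
    unfolding fin_piso_def
  proof (intro conjI ballI impI)
    show "finite (dom (q(w \<mapsto> s)))" using fd by simp
  next
    fix x y assume x: "x \<in> dom (q(w \<mapsto> s))" and y: "y \<in> dom (q(w \<mapsto> s))" and xy: "x < y"
    show "the ((q(w \<mapsto> s)) x) < the ((q(w \<mapsto> s)) y)"
    proof (cases "x = w")
      case True
      then have "y \<noteq> w" "y \<in> dom q" using xy y by auto
      then have "y \<notin> A" using w(2) True xy by auto
      then have "s < the (q y)" using ne[OF \<open>y \<in> dom q\<close>] \<open>y \<in> dom q\<close> unfolding A_def by auto
      then show ?thesis using True \<open>y \<noteq> w\<close> by simp
    next
      case False
      then have xq: "x \<in> dom q" using x by auto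
      show ?thesis
      proof (cases "y = w")
        case True
        then have "x \<notin> B" using w(3) xy by auto
        then have "the (q x) < s" using ne[OF xq] xq unfolding B_def by auto
        then show ?thesis using True False by simp
      next
        case False
        then have "y \<in> dom q" using y by auto
        then show ?thesis using f xq xy False \<open>x \<noteq> w\<close> unfolding fin_piso_def by auto
      qed
    qed
  qed
  moreover have "w + d < s" using w(3) unfolding B_def by auto
  ultimately show ?thesis using w(1) by blast
qed

lemma map_le_upd_new: "a \<notin> dom q \<Longrightarrow> q \<subseteq>\<^sub>m q(a \<mapsto> z)"
  unfolding map_le_def by auto

lemma fwd_round:
  assumes f: "fin_piso p" and di: "dincr d p" and d: "0 < d" and F: "finite F" and E: "E \<subseteq> ends p"
  shows "\<exists>q. p \<subseteq>\<^sub>m q \<and> fin_piso q \<and> dincr d q \<and> dom q = dom p \<union> E \<and>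
     (\<forall>z\<in>ran q. z \<in> ran p \<or> (z \<notin> F \<and> z \<notin> DR p \<and> (\<exists>e\<in>E. e + d \<le> z)))"
proof -
  have "finite E" using E fin_DR[OF f] unfolding ends_def using finite_subset by blast
  then show ?thesis using E
  proof (induction E rule: finite_subset_induct)
    case empty
    then show ?case using f di by (intro exI[of _ p]) auto
  next
    case (insert a E)
    then obtain q where q: "p \<subseteq>\<^sub>m q" "fin_piso q" "dincr d q" "dom q = dom p \<union> E"
      "\<forall>z\<in>ran q. z \<in> ran p \<or> (z \<notin> F \<and> z \<notin> DR p \<and> (\<exists>e\<in>E. e + d \<le> z))" by blast
    have anq: "a \<notin> dom q" using q(4) insert(2,3) unfolding ends_def by auto
    have fF: "finite (F \<union> DR q)" using F fin_DR[OF q(2)] by simp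
    obtain z where z: "z \<notin> F \<union> DR q" "a + d < z" "fin_piso (q(a \<mapsto> z))"
      using fwd_one[OF q(2) q(3) d anq fF] by blast
    define q' where "q' = q(a \<mapsto> z)"
    have "p \<subseteq>\<^sub>m q'" using q(1) map_le_upd_new[OF anq] map_le_trans unfolding q'_def by blast
    moreover have "dincr d q'" using q(3) z(2) unfolding q'_def dincr_def by auto
    moreover have "dom q' = dom p \<union> insert a E" using q(4) unfolding q'_def by auto
    moreover have "\<forall>z'\<in>ran q'. z' \<in> ran p \<or> (z' \<notin> F \<and> z' \<notin> DR p \<and> (\<exists>e\<in>insert a E. e + d \<le> z'))"
    proof
      fix z' assume "z' \<in> ran q'"
      then have "z' = z \<or> z' \<in> ran q" using anq unfolding q'_def by (auto simp: domIff)
      then show "z' \<in> ran p \<or> (z' \<notin> F \<and> z' \<notin> DR p \<and> (\<exists>e\<in>insert a E. e + d \<le> z'))"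
      proof
        assume "z' = z"
        moreover have "z \<notin> DR p" using z(1) DR_mono[OF q(1)] by auto
        ultimately show ?thesis using z by force
      next
        assume "z' \<in> ran q" then show ?thesis using q(5) by blast
      qed
    qed
    ultimately show ?case using z(3) unfolding q'_def by blast
  qed
qed

lemma bwd_round:
  assumes f: "fin_piso p" and di: "dincr d p" and d: "0 < d" and F: "finite F" and S: "S \<subseteq> starts p"
  shows "\<exists>q. p \<subseteq>\<^sub>m q \<and> fin_piso q \<and> dincr d q \<and> ran q = ran p \<union> S \<and>
     (\<forall>w\<in>dom q. w \<in> dom p \<or> (w \<notin> F \<and> w \<notin> DR p \<and> (\<exists>s\<in>S. w + d \<le> s)))"
proof -
  have "finite S" using S fin_DR[OF f] unfolding starts_def using finite_subset by blast
  then show ?thesis using S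
  proof (induction S rule: finite_subset_induct)
    case empty
    then show ?case using f di by (intro exI[of _ p]) auto
  next
    case (insert s S)
    then obtain q where q: "p \<subseteq>\<^sub>m q" "fin_piso q" "dincr d q" "ran q = ran p \<union> S"
      "\<forall>w\<in>dom q. w \<in> dom p \<or> (w \<notin> F \<and> w \<notin> DR p \<and> (\<exists>s\<in>S. w + d \<le> s))" by blast
    have snq: "s \<notin> ran q" using q(4) insert(2,3) unfolding starts_def by auto
    have fF: "finite (F \<union> DR q)" using F fin_DR[OF q(2)] by simp
    obtain w where w: "w \<notin> F \<union> DR q" "w \<notin> dom q" "w + d < s" "fin_piso (q(w \<mapsto> s))"
      using bwd_one[OF q(2) q(3) d snq fF] by blast
    define q' where "q' = q(w \<mapsto> s)"
    have "p \<subseteq>\<^sub>m q'" using q(1) map_le_upd_new[OF w(2)] map_le_trans unfolding q'_def by blast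
    moreover have "dincr d q'" using q(3) w(3) unfolding q'_def dincr_def by auto
    moreover have "ran q' = ran p \<union> insert s S" using q(4) w(2) unfolding q'_def by (auto simp: domIff)
    moreover have "\<forall>w'\<in>dom q'. w' \<in> dom p \<or> (w' \<notin> F \<and> w' \<notin> DR p \<and> (\<exists>e\<in>insert s S. w' + d \<le> e))"
    proof
      fix w' assume "w' \<in> dom q'"
      then have "w' = w \<or> w' \<in> dom q" unfolding q'_def by auto
      then show "w' \<in> dom p \<or> (w' \<notin> F \<and> w' \<notin> DR p \<and> (\<exists>e\<in>insert s S. w' + d \<le> e))"
      proof
        assume "w' = w"
        moreover have "w \<notin> DR p" using w(1) DR_mono[OF q(1)] by auto
        ultimately show ?thesis using w by force
      next
        assume "w' \<in> dom q" then show ?thesis using q(5) by blast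
      qed
    qed
    ultimately show ?case using w(4) unfolding q'_def by blast
  qed
qed



lemma fwd_all:
  assumes d: "0 < d" and F: "finite F"
  shows "fin_piso p \<Longrightarrow> dincr d p \<Longrightarrow> (\<forall>e\<in>ends p. Bd < e + of_nat n * d) \<Longrightarrow>
    \<exists>q. p \<subseteq>\<^sub>m q \<and> fin_piso q \<and> dincr d q \<and> (\<forall>e\<in>ends q. Bd < e) \<and> starts q = starts p \<and>
      (\<forall>z\<in>DR q. z \<in> DR p \<or> z \<notin> F)"
proof (induction n arbitrary: p)
  case 0
  then show ?case by (intro exI[of _ p]) auto
next
  case (Suc n)
  obtain q1 where q1: "p \<subseteq>\<^sub>m q1" "fin_piso q1" "dincr d q1" "dom q1 = dom p \<union> ends p"
     "\<forall>z\<in>ran q1. z \<in> ran p \<or> (z \<notin> F \<and> z \<notin> DR p \<and> (\<exists>e\<in>ends p. e + d \<le> z))"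
    using fwd_round[OF Suc.prems(1) Suc.prems(2) d F, of "ends p"] by blast
  have rp: "ran p \<subseteq> ran q1" using ran_mono[OF q1(1)] .
  have DRq1: "DR q1 = dom p \<union> ends p \<union> ran q1" using q1(4) unfolding DR_def by auto
  have endsq1: "\<forall>x\<in>ends q1. \<exists>e\<in>ends p. e + d \<le> x"
  proof
    fix x assume x: "x \<in> ends q1"
    then have "x \<in> ran q1" "x \<notin> dom p" "x \<notin> ends p" using q1(4) unfolding ends_def DR_def by auto
    moreover have "x \<notin> ran p" using calculation unfolding ends_def DR_def by auto
    ultimately show "\<exists>e\<in>ends p. e + d \<le> x" using q1(5) by blast
  qed
  have b1: "\<forall>e\<in>ends q1. Bd < e + of_nat n * d"
  proof
    fix x assume "x \<in> ends q1"
    then obtain e where "e \<in> ends p" "e + d \<le> x" using endsq1 by blast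
    then have "Bd < e + of_nat (Suc n) * d" using Suc.prems(3) by blast
    then show "Bd < x + of_nat n * d" using \<open>e + d \<le> x\<close> by (simp add: algebra_simps)
  qed
  have st: "starts q1 = starts p"
  proof -
    have "ends p \<subseteq> ran p" unfolding ends_def DR_def by auto
    then have "starts q1 = dom p - ran q1" unfolding starts_def using DRq1 rp by auto
    also have "\<dots> = dom p - ran p"
    proof
      show "dom p - ran q1 \<subseteq> dom p - ran p" using rp by auto
      show "dom p - ran p \<subseteq> dom p - ran q1"
      proof
        fix x assume "x \<in> dom p - ran p"
        then have "x \<in> DR p" "x \<notin> ran p" "x \<in> dom p" unfolding DR_def by auto
        then show "x \<in> dom p - ran q1" using q1(5) by blast
      qed
    qed
    also have "\<dots> = starts p" unfolding starts_def DR_def by auto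
    finally show ?thesis .
  qed
  have Fq1: "\<forall>z\<in>DR q1. z \<in> DR p \<or> z \<notin> F"
  proof
    fix z assume "z \<in> DR q1"
    then have "z \<in> dom p \<or> z \<in> ends p \<or> z \<in> ran q1" using DRq1 by auto
    then show "z \<in> DR p \<or> z \<notin> F" using q1(5) unfolding ends_def DR_def by blast
  qed
  obtain q where q: "q1 \<subseteq>\<^sub>m q" "fin_piso q" "dincr d q" "\<forall>e\<in>ends q. Bd < e" "starts q = starts q1"
      "\<forall>z\<in>DR q. z \<in> DR q1 \<or> z \<notin> F"
    using Suc.IH[OF q1(2) q1(3) b1] by blast
  have "p \<subseteq>\<^sub>m q" using q1(1) q(1) map_le_trans by blast
  moreover have "\<forall>z\<in>DR q. z \<in> DR p \<or> z \<notin> F" using q(6) Fq1 by blast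
  ultimately show ?case using q st by auto
qed

lemma bwd_all:
  assumes d: "0 < d" and F: "finite F"
  shows "fin_piso p \<Longrightarrow> dincr d p \<Longrightarrow> (\<forall>s\<in>starts p. s - of_nat n * d < Bd) \<Longrightarrow>
    \<exists>q. p \<subseteq>\<^sub>m q \<and> fin_piso q \<and> dincr d q \<and> (\<forall>s\<in>starts q. s < Bd) \<and> ends q = ends p \<and>
      (\<forall>z\<in>DR q. z \<in> DR p \<or> z \<notin> F)"
proof (induction n arbitrary: p)
  case 0
  then show ?case by (intro exI[of _ p]) auto
next
  case (Suc n)
  obtain q1 where q1: "p \<subseteq>\<^sub>m q1" "fin_piso q1" "dincr d q1" "ran q1 = ran p \<union> starts p"
     "\<forall>w\<in>dom q1. w \<in> dom p \<or> (w \<notin> F \<and> w \<notin> DR p \<and> (\<exists>s\<in>starts p. w + d \<le> s))"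
    using bwd_round[OF Suc.prems(1) Suc.prems(2) d F, of "starts p"] by blast
  have dp: "dom p \<subseteq> dom q1" using map_le_implies_dom_le[OF q1(1)] .
  have DRq1: "DR q1 = dom q1 \<union> ran p \<union> starts p" using q1(4) unfolding DR_def by auto
  have startsq1: "\<forall>x\<in>starts q1. \<exists>s\<in>starts p. x + d \<le> s"
  proof
    fix x assume x: "x \<in> starts q1"
    then have "x \<in> dom q1" "x \<notin> ran p" "x \<notin> starts p" using q1(4) unfolding starts_def DR_def by auto
    moreover have "x \<notin> dom p" using calculation unfolding starts_def DR_def by auto
    ultimately show "\<exists>s\<in>starts p. x + d \<le> s" using q1(5) by blast
  qed
  have b1: "\<forall>s\<in>starts q1. s - of_nat n * d < Bd"
  proof
    fix x assume "x \<in> starts q1"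
    then obtain s where "s \<in> starts p" "x + d \<le> s" using startsq1 by blast
    then have "s - of_nat (Suc n) * d < Bd" using Suc.prems(3) by blast
    then show "x - of_nat n * d < Bd" using \<open>x + d \<le> s\<close> by (simp add: algebra_simps)
  qed
  have en: "ends q1 = ends p"
  proof -
    have "starts p \<subseteq> dom p" unfolding starts_def DR_def by auto
    then have "ends q1 = ran p - dom q1" unfolding ends_def using DRq1 dp by auto
    also have "\<dots> = ran p - dom p"
    proof
      show "ran p - dom q1 \<subseteq> ran p - dom p" using dp by auto
      show "ran p - dom p \<subseteq> ran p - dom q1"
      proof
        fix x assume "x \<in> ran p - dom p"
        then have "x \<in> DR p" "x \<notin> dom p" "x \<in> ran p" unfolding DR_def by auto
        then show "x \<in> ran p - dom q1" using q1(5) by blast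
      qed
    qed
    also have "\<dots> = ends p" unfolding ends_def DR_def by auto
    finally show ?thesis .
  qed
  have Fq1: "\<forall>z\<in>DR q1. z \<in> DR p \<or> z \<notin> F"
  proof
    fix z assume "z \<in> DR q1"
    then have "z \<in> dom q1 \<or> z \<in> ran p \<or> z \<in> starts p" using DRq1 by auto
    then show "z \<in> DR p \<or> z \<notin> F" using q1(5) unfolding starts_def DR_def by blast
  qed
  obtain q where q: "q1 \<subseteq>\<^sub>m q" "fin_piso q" "dincr d q" "\<forall>s\<in>starts q. s < Bd" "ends q = ends q1"
      "\<forall>z\<in>DR q. z \<in> DR q1 \<or> z \<notin> F"
    using Suc.IH[OF q1(2) q1(3) b1] by blast
  have "p \<subseteq>\<^sub>m q" using q1(1) q(1) map_le_trans by blast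
  moreover have "\<forall>z\<in>DR q. z \<in> DR p \<or> z \<notin> F" using q(6) Fq1 by blast
  ultimately show ?case using q en by auto
qed

definition norm_c :: "rat \<Rightarrow> pmap \<Rightarrow> bool" where
  "norm_c c p \<longleftrightarrow> fin_piso p \<and> incr p \<and> c \<notin> DR p \<and> (\<forall>s\<in>starts p. s < c) \<and> (\<forall>e\<in>ends p. c < e)"

lemma dincr_incr: "0 < d \<Longrightarrow> dincr d p \<Longrightarrow> incr p"
  unfolding dincr_def incr_def by force

lemma normalize:
  assumes f: "fin_piso p" and inc: "incr p" and c: "c \<notin> DR p"
  shows "\<exists>q. p \<subseteq>\<^sub>m q \<and> norm_c c q"
proof (cases "dom p = {}")
  case True
  then have "ran p = {}" unfolding ran_def by auto
  then have "DR p = {}" using True unfolding DR_def by auto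
  then show ?thesis unfolding norm_c_def starts_def ends_def using f inc by (intro exI[of _ p]) auto
next
  case False
  have fd: "finite (dom p)" using f unfolding fin_piso_def by simp
  define d where "d = Min ((\<lambda>x. the (p x) - x) ` dom p)"
  have d0: "0 < d" unfolding d_def using fd False inc unfolding incr_def by simp
  have di: "dincr d p" unfolding dincr_def
  proof
    fix x assume "x \<in> dom p"
    then have "d \<le> the (p x) - x" unfolding d_def using fd by (intro Min_le) auto
    then show "x + d \<le> the (p x)" by simp
  qed
  have fD: "finite (DR p)" using fin_DR[OF f] .
  have neD: "DR p \<noteq> {}" using False unfolding DR_def by auto
  define m where "m = Min (DR p)"
  define M where "M = Max (DR p)"
  obtain n where n: "c - m < of_nat n * d" using ex_less_of_nat_mult[OF d0] by blast
  obtain n' where n': "M - c < of_nat n' * d" using ex_less_of_nat_mult[OF d0] by blast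
  have e1: "\<forall>e\<in>ends p. c < e + of_nat n * d"
  proof
    fix e assume "e \<in> ends p"
    then have "m \<le> e" unfolding m_def ends_def using fD by auto
    then show "c < e + of_nat n * d" using n by simp
  qed
  obtain q1 where q1: "p \<subseteq>\<^sub>m q1" "fin_piso q1" "dincr d q1" "\<forall>e\<in>ends q1. c < e" "starts q1 = starts p"
      "\<forall>z\<in>DR q1. z \<in> DR p \<or> z \<notin> {c}"
    using fwd_all[OF d0, of "{c}" p c n] f di e1 by blast
  have s1: "\<forall>s\<in>starts q1. s - of_nat n' * d < c"
  proof
    fix s assume "s \<in> starts q1"
    then have "s \<in> DR p" using q1(5) unfolding starts_def by auto
    then have "s \<le> M" unfolding M_def using fD by auto
    then show "s - of_nat n' * d < c" using n' by simp
  qed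
  obtain q where q: "q1 \<subseteq>\<^sub>m q" "fin_piso q" "dincr d q" "\<forall>s\<in>starts q. s < c" "ends q = ends q1"
      "\<forall>z\<in>DR q. z \<in> DR q1 \<or> z \<notin> {c}"
    using bwd_all[OF d0, of "{c}" q1 n' c] q1(2,3) s1 by blast
  have "c \<notin> DR q" using q(6) q1(6) c by blast
  moreover have "incr q" using dincr_incr d0 q(3) by blast
  moreover have "p \<subseteq>\<^sub>m q" using q1(1) q(1) map_le_trans by blast
  ultimately show ?thesis unfolding norm_c_def using q q1 by auto
qed

lemma cofinal_plus:
  assumes f: "fin_piso p" and inc: "incr p"
  shows "\<exists>q. goodp q \<and> p \<subseteq>\<^sub>m q"
proof (cases "DR p = {}")
  case True
  then have "dom p = {}" unfolding DR_def by auto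
  then have pe: "p = Map.empty" by auto
  define q :: pmap where "q = [0 \<mapsto> 1]"
  have "fin_piso q" unfolding q_def fin_piso_def by auto
  moreover have "incr q" unfolding q_def incr_def by auto
  moreover have "DR q = {0, 1}" unfolding q_def DR_def by auto
  moreover have "ends q = {1}" "starts q = {0}" unfolding q_def ends_def starts_def DR_def by auto
  ultimately have "goodp q" unfolding goodp_def by auto
  then show ?thesis using pe by auto
next
  case False
  have fD: "finite (DR p)" using fin_DR[OF f] .
  define c where "c = Max (DR p) + 1"
  have "c \<notin> DR p" unfolding c_def using fD False
    by (metis Max_ge less_add_one linorder_not_le)
  then obtain q where q: "p \<subseteq>\<^sub>m q" "norm_c c q" using normalize f inc by blast
  have "DR q \<noteq> {}" using DR_mono[OF q(1)] False by auto
  moreover have "\<forall>a\<in>ends q. \<forall>b\<in>starts q. b < a" using q(2) unfolding norm_c_def by force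
  ultimately have "goodp q" using q(2) unfolding goodp_def norm_c_def by auto
  then show ?thesis using q(1) by blast
qed



definition pl :: "rat \<Rightarrow> rat \<Rightarrow> rat \<Rightarrow> rat \<Rightarrow> rat \<Rightarrow> rat" where
  "pl l u v r x = (if x \<le> l \<or> r \<le> x then x else if x \<le> u then l + (x - l) * ((v - l) / (u - l))
      else v + (x - u) * ((r - v) / (r - u)))"

lemma pl_regions:
  assumes "l < u" "u < r" "l < v" "v < r"
  shows "x \<le> l \<Longrightarrow> pl l u v r x = x"
    and "r \<le> x \<Longrightarrow> pl l u v r x = x"
    and "l < x \<Longrightarrow> x \<le> u \<Longrightarrow> l < pl l u v r x \<and> pl l u v r x \<le> v"
    and "u < x \<Longrightarrow> x < r \<Longrightarrow> v < pl l u v r x \<and> pl l u v r x < r"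
proof -
  show "x \<le> l \<Longrightarrow> pl l u v r x = x" unfolding pl_def by simp
  show "r \<le> x \<Longrightarrow> pl l u v r x = x" unfolding pl_def by simp
  have k1: "0 < (v - l) / (u - l)" using assms by simp
  have k2: "0 < (r - v) / (r - u)" using assms by simp
  assume "l < x" "x \<le> u"
  then have e: "pl l u v r x = l + (x - l) * ((v - l) / (u - l))" unfolding pl_def using assms by auto
  have "0 < (x - l) * ((v - l) / (u - l))" using k1 \<open>l < x\<close> by (intro mult_pos_pos) auto
  moreover have "(x - l) * ((v - l) / (u - l)) \<le> (u - l) * ((v - l) / (u - l))"
    using k1 \<open>x \<le> u\<close> by (intro mult_right_mono) auto
  moreover have "(u - l) * ((v - l) / (u - l)) = v - l" using assms by simp
  ultimately show "l < pl l u v r x \<and> pl l u v r x \<le> v" using e by linarith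
next
  have k2: "0 < (r - v) / (r - u)" using assms by simp
  assume "u < x" "x < r"
  then have e: "pl l u v r x = v + (x - u) * ((r - v) / (r - u))" unfolding pl_def using assms by auto
  have "0 < (x - u) * ((r - v) / (r - u))" using k2 \<open>u < x\<close> by (intro mult_pos_pos) auto
  moreover have "(x - u) * ((r - v) / (r - u)) < (r - u) * ((r - v) / (r - u))"
    using k2 \<open>x < r\<close> by (intro mult_strict_right_mono) auto
  moreover have "(r - u) * ((r - v) / (r - u)) = r - v" using assms by simp
  ultimately show "v < pl l u v r x \<and> pl l u v r x < r" using e by linarith
qed

lemma pl_mono:
  assumes a: "l < u" "u < r" "l < v" "v < r"
  shows "strict_mono (pl l u v r)"
proof (rule strict_monoI)
  fix x y :: rat assume xy: "x < y"
  have k1: "0 < (v - l) / (u - l)" using a by simp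
  have k2: "0 < (r - v) / (r - u)" using a by simp
  note R = pl_regions[OF a]
  consider "x \<le> l" | "l < x \<and> x \<le> u" | "u < x \<and> x < r" | "r \<le> x" by linarith
  then show "pl l u v r x < pl l u v r y"
  proof cases
    case 1
    then show ?thesis
      using R(1)[of x] R(1)[of y] R(2)[of y] R(3)[of y] R(4)[of y] xy a
      by (cases "y \<le> l"; cases "r \<le> y"; cases "y \<le> u") force+
  next
    case 2
    show ?thesis
    proof (cases "y \<le> u")
      case True
      have "pl l u v r x = l + (x - l) * ((v - l) / (u - l))" "pl l u v r y = l + (y - l) * ((v - l) / (u - l))"
        using 2 True xy a unfolding pl_def by auto
      moreover have "(x - l) * ((v - l) / (u - l)) < (y - l) * ((v - l) / (u - l))"
        using k1 xy by (intro mult_strict_right_mono) auto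
      ultimately show ?thesis by linarith
    next
      case False
      then show ?thesis using R(3)[of x] R(4)[of y] R(2)[of y] 2 a by (cases "r \<le> y") force+
    qed
  next
    case 3
    show ?thesis
    proof (cases "y < r")
      case True
      have "pl l u v r x = v + (x - u) * ((r - v) / (r - u))" "pl l u v r y = v + (y - u) * ((r - v) / (r - u))"
        using 3 True xy a unfolding pl_def by auto
      moreover have "(x - u) * ((r - v) / (r - u)) < (y - u) * ((r - v) / (r - u))"
        using k2 xy by (intro mult_strict_right_mono) auto
      ultimately show ?thesis by linarith
    next
      case False
      then show ?thesis using R(4)[of x] R(2)[of y] 3 by force
    qed
  next
    case 4
    then show ?thesis using R(2)[of x] R(2)[of y] xy by simp
  qed
qed

lemma pl_inv:
  assumes a: "l < u" "u < r" "l < v" "v < r"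
  shows "pl l v u r (pl l u v r x) = x"
proof -
  note R = pl_regions[OF a]
  note R' = pl_regions[of l v r u]
  consider "x \<le> l" | "l < x \<and> x \<le> u" | "u < x \<and> x < r" | "r \<le> x" by linarith
  then show ?thesis
  proof cases
    case 1 then show ?thesis using R(1) R'(1) a by simp
  next
    case 2
    then have e: "pl l u v r x = l + (x - l) * ((v - l) / (u - l))" unfolding pl_def using a by auto
    have b: "l < pl l u v r x" "pl l u v r x \<le> v" using R(3) 2 by auto
    then have "pl l v u r (pl l u v r x) = l + (pl l u v r x - l) * ((u - l) / (v - l))"
      unfolding pl_def[of l v u r] using a by auto
    also have "\<dots> = x" using e a by (simp add: field_simps)
    finally show ?thesis .
  next
    case 3
    then have e: "pl l u v r x = v + (x - u) * ((r - v) / (r - u))" unfolding pl_def using a by auto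
    have b: "v < pl l u v r x" "pl l u v r x < r" using R(4) 3 by auto
    then have "pl l v u r (pl l u v r x) = u + (pl l u v r x - v) * ((r - u) / (r - v))"
      unfolding pl_def[of l v u r] using a by auto
    also have "\<dots> = x" using e a by (simp add: field_simps)
    finally show ?thesis .
  next
    case 4 then show ?thesis using R(2) R'(2) a by simp
  qed
qed

lemma aut_move:
  assumes a: "l < u" "u < r" "l < v" "v < r"
  shows "\<exists>g. is_aut g \<and> g u = v \<and> (\<forall>x. x \<le> l \<or> r \<le> x \<longrightarrow> g x = x)"
proof -
  have a': "l < v" "v < r" "l < u" "u < r" using a by auto
  have "pl l v u r \<circ> pl l u v r = id" using pl_inv[OF a] by auto
  moreover have "pl l u v r \<circ> pl l v u r = id" using pl_inv[OF a'] by auto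
  ultimately have "bij (pl l u v r)" using o_bij by blast
  moreover have "strict_mono (pl l u v r)" using pl_mono[OF a] .
  moreover have "pl l u v r u = v" unfolding pl_def using a by auto
  moreover have "\<forall>x. x \<le> l \<or> r \<le> x \<longrightarrow> pl l u v r x = x" unfolding pl_def by auto
  ultimately show ?thesis unfolding is_aut_def by blast
qed

lemma is_aut_comp: "is_aut f \<Longrightarrow> is_aut g \<Longrightarrow> is_aut (g \<circ> f)"
  unfolding is_aut_def strict_mono_def by (auto intro: bij_comp)

lemma ext_aut_aux:
  "finite D \<Longrightarrow> \<forall>h. dom h = D \<and> fin_piso h \<longrightarrow> (\<exists>b. is_aut b \<and> (\<forall>x\<in>dom h. b x = the (h x)))"
proof (induction D rule: finite_induct)
  case empty
  have "is_aut id" unfolding is_aut_def strict_mono_def by simp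
  then show ?case by auto
next
  case (insert a D)
  show ?case
  proof (intro allI impI)
    fix h assume hh: "dom h = insert a D \<and> fin_piso h"
    define h' where "h' = h(a := None)"
    have dh': "dom h' = D" using hh insert(2) unfolding h'_def by auto
    have fh': "fin_piso h'" unfolding fin_piso_def
    proof (intro conjI ballI impI)
      show "finite (dom h')" using dh' insert(1) by simp
    next
      fix x y assume "x \<in> dom h'" "y \<in> dom h'" "x < y"
      then have "x \<in> dom h" "y \<in> dom h" "h' x = h x" "h' y = h y" unfolding h'_def by (auto split: if_splits)
      then show "the (h' x) < the (h' y)" using hh \<open>x < y\<close> unfolding fin_piso_def by auto
    qed
    obtain b where b: "is_aut b" "\<forall>x\<in>dom h'. b x = the (h' x)" using insert(3) dh' fh' by blast
    have bD: "x \<in> D \<Longrightarrow> b x = the (h x)" for x using b(2) dh' insert(2) unfolding h'_def by auto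
    have smb: "strict_mono b" using b(1) unfolding is_aut_def by simp
    define u where "u = b a"
    define v where "v = the (h a)"
    have ha: "a \<in> dom h" using hh by simp
    have hop: "x \<in> dom h \<Longrightarrow> y \<in> dom h \<Longrightarrow> x < y \<Longrightarrow> the (h x) < the (h y)" for x y
      using hh unfolding fin_piso_def by blast
    define L where "L = insert (min u v - 1) ((\<lambda>x. the (h x)) ` {x\<in>D. x < a})"
    define R where "R = insert (max u v + 1) ((\<lambda>x. the (h x)) ` {x\<in>D. a < x})"
    have fL: "finite L" and fR: "finite R" using insert(1) unfolding L_def R_def by auto
    define l where "l = Max L"
    define r where "r = Min R"
    have Lu: "\<forall>y\<in>L. y < u \<and> y < v"
    proof
      fix y assume "y \<in> L"
      then consider "y = min u v - 1" | x where "x \<in> D" "x < a" "y = the (h x)" unfolding L_def by auto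
      then show "y < u \<and> y < v"
      proof cases
        case 1 then show ?thesis by linarith
      next
        case 2
        have "y = b x" using bD 2 by simp
        then have "y < u" using smb 2 unfolding u_def strict_mono_def by simp
        moreover have "y < v" using hop[of x a] 2 ha hh unfolding v_def by auto
        ultimately show ?thesis by simp
      qed
    qed
    have Ru: "\<forall>y\<in>R. u < y \<and> v < y"
    proof
      fix y assume "y \<in> R"
      then consider "y = max u v + 1" | x where "x \<in> D" "a < x" "y = the (h x)" unfolding R_def by auto
      then show "u < y \<and> v < y"
      proof cases
        case 1 then show ?thesis by linarith
      next
        case 2
        have "y = b x" using bD 2 by simp
        then have "u < y" using smb 2 unfolding u_def strict_mono_def by simp
        moreover have "v < y" using hop[of a x] 2 ha hh unfolding v_def by auto
        ultimately show ?thesis by simp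
      qed
    qed
    have Lne: "L \<noteq> {}" and Rne: "R \<noteq> {}" unfolding L_def R_def by auto
    have lu: "l < u" "l < v" unfolding l_def using Max_less_iff[OF fL Lne] Lu by auto
    have ru: "u < r" "v < r" unfolding r_def using Min_gr_iff[OF fR Rne] Ru by auto
    obtain g where g: "is_aut g" "g u = v" "\<forall>x. x \<le> l \<or> r \<le> x \<longrightarrow> g x = x"
      using aut_move[OF lu(1) ru(1) lu(2) ru(2)] by blast
    have "is_aut (g \<circ> b)" using is_aut_comp b(1) g(1) by blast
    moreover have "\<forall>x\<in>dom h. (g \<circ> b) x = the (h x)"
    proof
      fix x assume "x \<in> dom h"
      then have "x = a \<or> x \<in> D" using hh by auto
      then show "(g \<circ> b) x = the (h x)"
      proof
        assume "x = a" then show ?thesis using g(2) unfolding u_def v_def by simp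
      next
        assume xD: "x \<in> D"
        then have xa: "x \<noteq> a" using insert(2) by auto
        show ?thesis
        proof (cases "x < a")
          case True
          then have "the (h x) \<in> L" using xD unfolding L_def by auto
          then have "the (h x) \<le> l" unfolding l_def using fL by simp
          then show ?thesis using g(3) bD[OF xD] by simp
        next
          case False
          then have "a < x" using xa by simp
          then have "the (h x) \<in> R" using xD unfolding R_def by auto
          then have "r \<le> the (h x)" unfolding r_def using fR by simp
          then show ?thesis using g(3) bD[OF xD] by simp
        qed
      qed
    qed
    ultimately show "\<exists>b. is_aut b \<and> (\<forall>x\<in>dom h. b x = the (h x))" by blast
  qed
qed

lemma ext_aut: "fin_piso h \<Longrightarrow> \<exists>b. is_aut b \<and> (\<forall>x\<in>dom h. b x = the (h x))"
  using ext_aut_aux[of "dom h"] unfolding fin_piso_def by blast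



definition gl :: "rat \<Rightarrow> rat \<Rightarrow> rat" where "gl c t = (t - c) / (t - c + 1)"

lemma gl_bounds: "c < t \<Longrightarrow> 0 < gl c t \<and> gl c t < 1"
  unfolding gl_def by (auto simp: divide_less_eq)

lemma gl_alt: "c < x \<Longrightarrow> gl c x = 1 - 1 / (x - c + 1)"
  unfolding gl_def by (simp add: field_simps)

lemma gl_mono: assumes "c < s" "s < t" shows "gl c s < gl c t"
proof -
  have "1 / (t - c + 1) < 1 / (s - c + 1)" using assms by (intro divide_strict_left_mono) auto
  then show ?thesis using gl_alt assms by simp
qed

definition mu :: "rat \<Rightarrow> pmap \<Rightarrow> rat \<Rightarrow> nat" where
  "mu c p x = (if c < x then card {y\<in>DR p. c < y \<and> y < x}
      else card (DR p) + 1 + card {y\<in>DR p. x < y \<and> y \<le> c})"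

lemma mu_dec1:
  assumes a: "c < x" "finite (dom p)" "p (pinv p x) = Some x" "c < pinv p x" "pinv p x < x"
  shows "mu c p (pinv p x) < mu c p x"
proof -
  have fD: "finite (DR p)" using a unfolding DR_def by (simp add: finite_ran)
  have pD: "pinv p x \<in> DR p" using a unfolding DR_def by auto
  have sub: "{y\<in>DR p. c < y \<and> y < pinv p x} \<subset> {y\<in>DR p. c < y \<and> y < x}" using a pD by auto
  have "card {y\<in>DR p. c < y \<and> y < pinv p x} < card {y\<in>DR p. c < y \<and> y < x}"
    using psubset_card_mono[OF _ sub] fD by simp
  then show ?thesis using a unfolding mu_def by simp
qed

lemma mu_dec2:
  assumes a: "\<not> c < x" "finite (dom p)" "x \<in> dom p" "x < the (p x)"
  shows "mu c p (the (p x)) < mu c p x"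
proof -
  have fD: "finite (DR p)" using a unfolding DR_def by (simp add: finite_ran)
  have pD: "the (p x) \<in> DR p" using a unfolding DR_def ran_def by auto
  show ?thesis
  proof (cases "c < the (p x)")
    case True
    have "card {y\<in>DR p. c < y \<and> y < the (p x)} \<le> card (DR p)" using fD by (intro card_mono) auto
    then show ?thesis using a True unfolding mu_def by simp
  next
    case False
    have m1: "the (p x) \<in> {y\<in>DR p. x < y \<and> y \<le> c}" using a(4) pD False by simp
    have m2: "the (p x) \<notin> {y\<in>DR p. the (p x) < y \<and> y \<le> c}" by simp
    have m3: "{y\<in>DR p. the (p x) < y \<and> y \<le> c} \<subseteq> {y\<in>DR p. x < y \<and> y \<le> c}" using a(4) by auto
    have sub: "{y\<in>DR p. the (p x) < y \<and> y \<le> c} \<subset> {y\<in>DR p. x < y \<and> y \<le> c}" using m1 m2 m3 by blast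
    have "card {y\<in>DR p. the (p x) < y \<and> y \<le> c} < card {y\<in>DR p. x < y \<and> y \<le> c}"
      using psubset_card_mono[OF _ sub] fD by simp
    then show ?thesis using a False unfolding mu_def by simp
  qed
qed

function phi :: "rat \<Rightarrow> pmap \<Rightarrow> rat \<Rightarrow> rat" where
  "phi c p x = (if c < x then
      (if finite (dom p) \<and> p (pinv p x) = Some x \<and> c < pinv p x \<and> pinv p x < x
       then phi c p (pinv p x) + 1 else gl c x)
    else (if finite (dom p) \<and> x \<in> dom p \<and> x < the (p x) then phi c p (the (p x)) - 1 else 0))"
  by pat_completeness auto
termination
  apply (relation "measure (\<lambda>(c, p, x). mu c p x)")
    apply simp
   apply (simp add: mu_dec1)
  apply (simp add: mu_dec2)
  done

declare phi.simps[simp del]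



lemma nc_fin: "norm_c c p \<Longrightarrow> fin_piso p" unfolding norm_c_def by simp
lemma nc_finD: "norm_c c p \<Longrightarrow> finite (DR p)" using fin_DR nc_fin by blast
lemma nc_fdom: "norm_c c p \<Longrightarrow> finite (dom p)" using nc_fin unfolding fin_piso_def by blast

lemma nc_pos:
  assumes n: "norm_c c p" and y: "y \<in> DR p" "c < y"
  shows "p (pinv p y) = Some y \<and> pinv p y < y \<and> pinv p y \<in> DR p \<and> pinv p y \<noteq> c"
proof -
  have f: "fin_piso p" and inc: "incr p" and cD: "c \<notin> DR p" and st: "\<forall>s\<in>starts p. s < c"
    using n unfolding norm_c_def by auto
  have "y \<notin> starts p" using st y by force
  then have "y \<in> ran p" using y unfolding starts_def by auto
  then have pp: "p (pinv p y) = Some y" using pinv_ran f by blast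
  then have "pinv p y < y" using inc unfolding incr_def by force
  moreover have "pinv p y \<in> DR p" using pp unfolding DR_def by auto
  ultimately show ?thesis using pp cD by auto
qed

lemma nc_neg:
  assumes n: "norm_c c p" and x: "x \<in> DR p" "x < c"
  shows "x \<in> dom p \<and> x < the (p x) \<and> the (p x) \<in> DR p \<and> the (p x) \<noteq> c \<and> pinv p (the (p x)) = x"
proof -
  have f: "fin_piso p" and inc: "incr p" and cD: "c \<notin> DR p" and en: "\<forall>e\<in>ends p. c < e"
    using n unfolding norm_c_def by auto
  have "x \<notin> ends p" using en x by force
  then have xd: "x \<in> dom p" using x unfolding ends_def by auto
  then have "x < the (p x)" using inc unfolding incr_def by auto
  moreover have "the (p x) \<in> DR p" using xd unfolding DR_def ran_def by auto
  moreover have "pinv p (the (p x)) = x" using pinv_eq[OF f] xd by auto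
  ultimately show ?thesis using xd cD by auto
qed

lemma phi_pos_cross:
  assumes "norm_c c p" "y \<in> DR p" "c < y" "pinv p y < c"
  shows "phi c p y = gl c y"
  using assms by (subst phi.simps) auto

lemma phi_pos_step:
  assumes n: "norm_c c p" and y: "y \<in> DR p" "c < y" "c < pinv p y"
  shows "phi c p y = phi c p (pinv p y) + 1"
  using nc_pos[OF n y(1,2)] nc_fdom[OF n] y by (subst phi.simps) auto

lemma phi_neg_step:
  assumes n: "norm_c c p" and x: "x \<in> DR p" "x < c"
  shows "phi c p x = phi c p (the (p x)) - 1"
  using nc_neg[OF n x] nc_fdom[OF n] x by (subst phi.simps) auto

lemma phi_step:
  assumes n: "norm_c c p" and x: "x \<in> dom p"
  shows "phi c p (the (p x)) = phi c p x + 1"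
proof -
  have xD: "x \<in> DR p" using x unfolding DR_def by auto
  have "x \<noteq> c" using n xD unfolding norm_c_def by auto
  then consider "x < c" | "c < x" by linarith
  then show ?thesis
  proof cases
    case 1 then show ?thesis using phi_neg_step[OF n xD] by simp
  next
    case 2
    have f: "fin_piso p" using nc_fin[OF n] .
    have px: "x < the (p x)" using n x unfolding norm_c_def incr_def by auto
    have pD: "the (p x) \<in> DR p" using x unfolding DR_def ran_def by auto
    have "pinv p (the (p x)) = x" using pinv_eq[OF f] x by auto
    then show ?thesis using phi_pos_step[OF n pD] 2 px by simp
  qed
qed

definition mp :: "rat \<Rightarrow> pmap \<Rightarrow> rat \<Rightarrow> nat" where
  "mp c p y = card {z\<in>DR p. c < z \<and> z < y}"
definition mn :: "rat \<Rightarrow> pmap \<Rightarrow> rat \<Rightarrow> nat" where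
  "mn c p x = card {z\<in>DR p. x < z \<and> z < c}"

lemma mp_less:
  assumes fD: "finite (DR p)" and x: "x \<in> DR p" "c < x" "x < y"
  shows "mp c p x < mp c p y"
proof -
  have m1: "x \<in> {z\<in>DR p. c < z \<and> z < y}" using x by simp
  have m2: "x \<notin> {z\<in>DR p. c < z \<and> z < x}" by simp
  have m3: "{z\<in>DR p. c < z \<and> z < x} \<subseteq> {z\<in>DR p. c < z \<and> z < y}" using x(3) by auto
  have sub: "{z\<in>DR p. c < z \<and> z < x} \<subset> {z\<in>DR p. c < z \<and> z < y}" using m1 m2 m3 by blast
  show ?thesis unfolding mp_def using psubset_card_mono[OF _ sub] fD by simp
qed

lemma mn_less:
  assumes fD: "finite (DR p)" and y: "y \<in> DR p" "x < y" "y < c"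
  shows "mn c p y < mn c p x"
proof -
  have m1: "y \<in> {z\<in>DR p. x < z \<and> z < c}" using y by simp
  have m2: "y \<notin> {z\<in>DR p. y < z \<and> z < c}" by simp
  have m3: "{z\<in>DR p. y < z \<and> z < c} \<subseteq> {z\<in>DR p. x < z \<and> z < c}" using y(2) by auto
  have sub: "{z\<in>DR p. y < z \<and> z < c} \<subset> {z\<in>DR p. x < z \<and> z < c}" using m1 m2 m3 by blast
  show ?thesis unfolding mn_def using psubset_card_mono[OF _ sub] fD by simp
qed

lemma phi_pos_bounds_aux:
  assumes n: "norm_c c p"
  shows "\<forall>y. y \<in> DR p \<and> c < y \<and> mp c p y = k \<longrightarrow>
     0 < phi c p y \<and> (pinv p y < c \<longrightarrow> phi c p y < 1) \<and> (c < pinv p y \<longrightarrow> 1 < phi c p y)"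
proof (induction k rule: less_induct)
  case (less k)
  show ?case
  proof (intro allI impI)
    fix y assume y: "y \<in> DR p \<and> c < y \<and> mp c p y = k"
    note P = nc_pos[OF n conjunct1[OF y] conjunct1[OF conjunct2[OF y]]]
    show "0 < phi c p y \<and> (pinv p y < c \<longrightarrow> phi c p y < 1) \<and> (c < pinv p y \<longrightarrow> 1 < phi c p y)"
    proof (cases "pinv p y < c")
      case True
      then show ?thesis using phi_pos_cross[OF n _ _ True] gl_bounds[of c y] y by auto
    next
      case False
      then have cp: "c < pinv p y" using P by auto
      have "mp c p (pinv p y) < k" using mp_less[OF nc_finD[OF n], of "pinv p y" c y] P cp y by auto
      then have "0 < phi c p (pinv p y)" using less P cp by blast
      then show ?thesis using phi_pos_step[OF n _ _ cp] y cp by auto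
    qed
  qed
qed

lemma phi_pos_bounds:
  assumes "norm_c c p" "y \<in> DR p" "c < y"
  shows "0 < phi c p y \<and> (pinv p y < c \<longrightarrow> phi c p y < 1) \<and> (c < pinv p y \<longrightarrow> 1 < phi c p y)"
  using phi_pos_bounds_aux[OF assms(1)] assms by blast

lemma phi_pos_mono_aux:
  assumes n: "norm_c c p"
  shows "\<forall>x y. x \<in> DR p \<and> y \<in> DR p \<and> c < x \<and> x < y \<and> mp c p y = k \<longrightarrow> phi c p x < phi c p y"
proof (induction k rule: less_induct)
  case (less k)
  show ?case
  proof (intro allI impI)
    fix x y assume a: "x \<in> DR p \<and> y \<in> DR p \<and> c < x \<and> x < y \<and> mp c p y = k"
    then have xD: "x \<in> DR p" and yD: "y \<in> DR p" and cx: "c < x" and xy: "x < y" and k: "mp c p y = k" by auto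
    have cy: "c < y" using cx xy by simp
    note Px = nc_pos[OF n xD cx]
    note Py = nc_pos[OF n yD cy]
    have f: "fin_piso p" using nc_fin[OF n] .
    have pxy: "pinv p x < pinv p y" using OP_iff[OF f, of "pinv p x" x "pinv p y" y] Px Py xy by auto
    note Bx = phi_pos_bounds[OF n xD cx]
    note By = phi_pos_bounds[OF n yD cy]
    show "phi c p x < phi c p y"
    proof (cases "pinv p y < c")
      case True
      then have "pinv p x < c" using pxy by simp
      then show ?thesis using phi_pos_cross[OF n xD cx] phi_pos_cross[OF n yD cy True] gl_mono[OF cx xy] by simp
    next
      case False
      then have cpy: "c < pinv p y" using Py by auto
      show ?thesis
      proof (cases "pinv p x < c")
        case True
        then show ?thesis using Bx By cpy by auto
      next
        case False
        then have cpx: "c < pinv p x" using Px by auto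
        have "mp c p (pinv p y) < k" using mp_less[OF nc_finD[OF n], of "pinv p y" c y] Py cpy k by auto
        then have "phi c p (pinv p x) < phi c p (pinv p y)" using less Px Py cpx pxy by blast
        then show ?thesis using phi_pos_step[OF n xD cx cpx] phi_pos_step[OF n yD cy cpy] by simp
      qed
    qed
  qed
qed

lemma phi_pos_mono:
  assumes "norm_c c p" "x \<in> DR p" "y \<in> DR p" "c < x" "x < y"
  shows "phi c p x < phi c p y"
  using phi_pos_mono_aux[OF assms(1)] assms by blast

lemma phi_neg_bounds_aux:
  assumes n: "norm_c c p"
  shows "\<forall>x. x \<in> DR p \<and> x < c \<and> mn c p x = k \<longrightarrow> phi c p x < 0"
proof (induction k rule: less_induct)
  case (less k)
  show ?case
  proof (intro allI impI)
    fix x assume a: "x \<in> DR p \<and> x < c \<and> mn c p x = k"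
    then have xD: "x \<in> DR p" and xc: "x < c" and k: "mn c p x = k" by auto
    note N = nc_neg[OF n xD xc]
    have e: "phi c p x = phi c p (the (p x)) - 1" using phi_neg_step[OF n xD xc] .
    show "phi c p x < 0"
    proof (cases "c < the (p x)")
      case True
      have "phi c p (the (p x)) < 1" using phi_pos_bounds[OF n _ True] N xc by auto
      then show ?thesis using e by simp
    next
      case False
      then have "the (p x) < c" using N by auto
      moreover have "mn c p (the (p x)) < k" using mn_less[OF nc_finD[OF n], of "the (p x)" x c] N k calculation by auto
      ultimately have "phi c p (the (p x)) < 0" using less N by blast
      then show ?thesis using e by simp
    qed
  qed
qed

lemma phi_neg_bounds:
  assumes "norm_c c p" "x \<in> DR p" "x < c"
  shows "phi c p x < 0"
  using phi_neg_bounds_aux[OF assms(1)] assms by blast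

lemma phi_neg_mono_aux:
  assumes n: "norm_c c p"
  shows "\<forall>x y. x \<in> DR p \<and> y \<in> DR p \<and> y < c \<and> x < y \<and> mn c p x = k \<longrightarrow> phi c p x < phi c p y"
proof (induction k rule: less_induct)
  case (less k)
  show ?case
  proof (intro allI impI)
    fix x y assume a: "x \<in> DR p \<and> y \<in> DR p \<and> y < c \<and> x < y \<and> mn c p x = k"
    then have xD: "x \<in> DR p" and yD: "y \<in> DR p" and yc: "y < c" and xy: "x < y" and k: "mn c p x = k" by auto
    have xc: "x < c" using xy yc by simp
    note Nx = nc_neg[OF n xD xc]
    note Ny = nc_neg[OF n yD yc]
    have f: "fin_piso p" using nc_fin[OF n] .
    have pxy: "the (p x) < the (p y)" using f Nx Ny xy unfolding fin_piso_def by blast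
    have ex: "phi c p x = phi c p (the (p x)) - 1" using phi_neg_step[OF n xD xc] .
    have ey: "phi c p y = phi c p (the (p y)) - 1" using phi_neg_step[OF n yD yc] .
    show "phi c p x < phi c p y"
    proof (cases "c < the (p x)")
      case True
      then have "phi c p (the (p x)) < phi c p (the (p y))" using phi_pos_mono[OF n _ _ True pxy] Nx Ny by auto
      then show ?thesis using ex ey by simp
    next
      case False
      then have pxc: "the (p x) < c" using Nx by auto
      show ?thesis
      proof (cases "c < the (p y)")
        case True
        then have "phi c p (the (p x)) < 0" "0 < phi c p (the (p y))"
          using phi_neg_bounds[OF n _ pxc] phi_pos_bounds[OF n _ True] Nx Ny by auto
        then show ?thesis using ex ey by simp
      next
        case False
        then have pyc: "the (p y) < c" using Ny by auto
        have "mn c p (the (p x)) < k" using mn_less[OF nc_finD[OF n], of "the (p x)" x c] Nx pxc k by auto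
        then have "phi c p (the (p x)) < phi c p (the (p y))" using less Nx Ny pyc pxy by blast
        then show ?thesis using ex ey by simp
      qed
    qed
  qed
qed

lemma phi_mono:
  assumes n: "norm_c c p" and xy: "x \<in> DR p" "y \<in> DR p" "x < y"
  shows "phi c p x < phi c p y"
proof -
  have "x \<noteq> c" "y \<noteq> c" using n xy unfolding norm_c_def by auto
  then consider "c < x" | "x < c" "c < y" | "y < c" using xy(3) by linarith
  then show ?thesis
  proof cases
    case 1 then show ?thesis using phi_pos_mono[OF n xy(1,2) 1 xy(3)] by simp
  next
    case 2 then show ?thesis using phi_neg_bounds[OF n xy(1)] phi_pos_bounds[OF n xy(2)] by force
  next
    case 3 then show ?thesis using phi_neg_mono_aux[OF n] xy by blast
  qed
qed

lemma phi_agree_pos_aux: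
  assumes np: "norm_c c p" and nq: "norm_c c q" and le: "p \<subseteq>\<^sub>m q"
  shows "\<forall>d. d \<in> DR p \<and> c < d \<and> mp c p d = k \<longrightarrow> phi c q d = phi c p d"
proof (induction k rule: less_induct)
  case (less k)
  show ?case
  proof (intro allI impI)
    fix d assume a: "d \<in> DR p \<and> c < d \<and> mp c p d = k"
    then have dD: "d \<in> DR p" and cd: "c < d" and k: "mp c p d = k" by auto
    note P = nc_pos[OF np dD cd]
    have dq: "d \<in> DR q" using DR_mono[OF le] dD by blast
    have "q (pinv p d) = Some d" using P le unfolding map_le_def by (metis domI)
    then have pq: "pinv q d = pinv p d" using pinv_eq[OF nc_fin[OF nq]] by blast
    show "phi c q d = phi c p d"
    proof (cases "pinv p d < c")
      case True
      then show ?thesis using phi_pos_cross[OF np dD cd True] phi_pos_cross[OF nq dq cd] pq by simp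
    next
      case False
      then have cp: "c < pinv p d" using P by auto
      have "mp c p (pinv p d) < k" using mp_less[OF nc_finD[OF np], of "pinv p d" c d] P cp k by auto
      then have "phi c q (pinv p d) = phi c p (pinv p d)" using less P cp by blast
      then show ?thesis using phi_pos_step[OF np dD cd cp] phi_pos_step[OF nq dq cd] pq cp by simp
    qed
  qed
qed

lemma phi_agree_neg_aux:
  assumes np: "norm_c c p" and nq: "norm_c c q" and le: "p \<subseteq>\<^sub>m q"
  shows "\<forall>d. d \<in> DR p \<and> d < c \<and> mn c p d = k \<longrightarrow> phi c q d = phi c p d"
proof (induction k rule: less_induct)
  case (less k)
  show ?case
  proof (intro allI impI)
    fix d assume a: "d \<in> DR p \<and> d < c \<and> mn c p d = k"
    then have dD: "d \<in> DR p" and dc: "d < c" and k: "mn c p d = k" by auto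
    note N = nc_neg[OF np dD dc]
    have dq: "d \<in> DR q" using DR_mono[OF le] dD by blast
    have qd: "q d = p d" using N le unfolding map_le_def by auto
    have ep: "phi c p d = phi c p (the (p d)) - 1" using phi_neg_step[OF np dD dc] .
    have eq: "phi c q d = phi c q (the (p d)) - 1" using phi_neg_step[OF nq dq dc] qd by simp
    show "phi c q d = phi c p d"
    proof (cases "c < the (p d)")
      case True
      then have "phi c q (the (p d)) = phi c p (the (p d))"
        using phi_agree_pos_aux[OF np nq le] N by blast
      then show ?thesis using ep eq by simp
    next
      case False
      then have pc: "the (p d) < c" using N by auto
      have "mn c p (the (p d)) < k" using mn_less[OF nc_finD[OF np], of "the (p d)" d c] N pc k by auto
      then have "phi c q (the (p d)) = phi c p (the (p d))" using less N pc by blast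
      then show ?thesis using ep eq by simp
    qed
  qed
qed

lemma phi_agree:
  assumes np: "norm_c c p" and nq: "norm_c c q" and le: "p \<subseteq>\<^sub>m q" and d: "d \<in> DR p"
  shows "phi c q d = phi c p d"
proof -
  have "d \<noteq> c" using np d unfolding norm_c_def by auto
  then consider "c < d" | "d < c" by linarith
  then show ?thesis
  proof cases
    case 1 then show ?thesis using phi_agree_pos_aux[OF np nq le] d by blast
  next
    case 2 then show ?thesis using phi_agree_neg_aux[OF np nq le] d by blast
  qed
qed



lemma aut_inv_l: "is_aut b \<Longrightarrow> inv b (b x) = x"
  unfolding is_aut_def by (simp add: bij_is_inj)
lemma aut_inv_r: "is_aut b \<Longrightarrow> b (inv b y) = y"
  unfolding is_aut_def by (simp add: bij_is_surj surj_f_inv_f)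

lemma aut_smono: "is_aut b \<Longrightarrow> x < y \<Longrightarrow> b x < b y"
  unfolding is_aut_def strict_mono_def by blast

lemma aut_inv: assumes a: "is_aut b" shows "is_aut (inv b)"
proof -
  have "bij (inv b)" using a unfolding is_aut_def by (simp add: bij_imp_bij_inv)
  moreover have "strict_mono (inv b)"
  proof (rule strict_monoI)
    fix x y :: rat assume xy: "x < y"
    show "inv b x < inv b y"
    proof (rule ccontr)
      assume "\<not> inv b x < inv b y"
      then have "inv b y < inv b x \<or> inv b y = inv b x" by auto
      then have "b (inv b y) < b (inv b x) \<or> b (inv b y) = b (inv b x)" using aut_smono[OF a] by auto
      then show False using aut_inv_r[OF a] xy by (metis less_asym order_less_irrefl)
    qed
  qed
  ultimately show ?thesis unfolding is_aut_def by simp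
qed

lemma map_le_SomeD: "p \<subseteq>\<^sub>m q \<Longrightarrow> p x = Some y \<Longrightarrow> q x = Some y"
  unfolding map_le_def by (metis domI)

lemma amalg_plus:
  assumes g0: "goodp p0" and g1: "goodp p1" and g2: "goodp p2"
    and l1: "p0 \<subseteq>\<^sub>m p1" and l2: "p0 \<subseteq>\<^sub>m p2"
  shows "\<exists>p3. goodp p3 \<and> (\<exists>\<alpha>. is_aut \<alpha> \<and> (\<forall>x\<in>DR p0. \<alpha> x = x) \<and> p1 \<subseteq>\<^sub>m p3 \<and> aut_apply \<alpha> p2 \<subseteq>\<^sub>m p3)"
proof -
  have f0: "fin_piso p0" and i0: "incr p0" and gd0: "\<forall>a\<in>ends p0. \<forall>b\<in>starts p0. b < a"
    using g0 unfolding goodp_def by auto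
  have f1: "fin_piso p1" and i1: "incr p1" using g1 unfolding goodp_def by auto
  have f2: "fin_piso p2" and i2: "incr p2" using g2 unfolding goodp_def by auto
  have fs: "finite (starts p0)" "finite (ends p0)" "finite (DR p1 \<union> DR p2)"
    using fin_DR[OF f0] fin_DR[OF f1] fin_DR[OF f2] unfolding starts_def ends_def by auto
  have AB: "\<forall>a\<in>starts p0. \<forall>b\<in>ends p0. a < b" using gd0 by blast
  obtain c where c: "c \<notin> DR p1 \<union> DR p2" "\<forall>a\<in>starts p0. a < c" "\<forall>b\<in>ends p0. c < b"
    using gap[OF fs AB] by blast
  have c0: "c \<notin> DR p0" using c(1) DR_mono[OF l1] by blast
  have n0: "norm_c c p0" unfolding norm_c_def using f0 i0 c0 c(2,3) by blast
  obtain q1 where q1: "p1 \<subseteq>\<^sub>m q1" "norm_c c q1" using normalize[OF f1 i1] c(1) by blast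
  obtain q2 where q2: "p2 \<subseteq>\<^sub>m q2" "norm_c c q2" using normalize[OF f2 i2] c(1) by blast
  have l01: "p0 \<subseteq>\<^sub>m q1" using l1 q1(1) map_le_trans by blast
  have l02: "p0 \<subseteq>\<^sub>m q2" using l2 q2(1) map_le_trans by blast
  define h1 where "h1 = (\<lambda>x. if x \<in> DR q1 then Some (phi c q1 x) else None)"
  define h2 where "h2 = (\<lambda>x. if x \<in> DR q2 then Some (phi c q2 x) else None)"
  have dh1: "dom h1 = DR q1" unfolding h1_def by (auto split: if_splits)
  have dh2: "dom h2 = DR q2" unfolding h2_def by (auto split: if_splits)
  have fh1: "fin_piso h1" unfolding fin_piso_def dh1 using nc_finD[OF q1(2)] phi_mono[OF q1(2)]
    unfolding h1_def by auto
  have fh2: "fin_piso h2" unfolding fin_piso_def dh2 using nc_finD[OF q2(2)] phi_mono[OF q2(2)]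
    unfolding h2_def by auto
  obtain b1 where b1: "is_aut b1" "\<forall>x\<in>dom h1. b1 x = the (h1 x)" using ext_aut[OF fh1] by blast
  obtain b2 where b2: "is_aut b2" "\<forall>x\<in>dom h2. b2 x = the (h2 x)" using ext_aut[OF fh2] by blast
  have B1: "x \<in> DR q1 \<Longrightarrow> b1 x = phi c q1 x" for x using b1(2) dh1 unfolding h1_def by auto
  have B2: "x \<in> DR q2 \<Longrightarrow> b2 x = phi c q2 x" for x using b2(2) dh2 unfolding h2_def by auto
  define al where "al = inv b1 \<circ> b2"
  have ial: "is_aut al" unfolding al_def using is_aut_comp[OF b2(1) aut_inv[OF b1(1)]] .
  define G where "G = (\<lambda>x. inv b1 (b1 x + 1))"
  have Gmono: "x < y \<Longrightarrow> G x < G y" for x y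
    unfolding G_def using aut_smono[OF aut_inv[OF b1(1)]] aut_smono[OF b1(1)] by simp
  have Ginc: "x < G x" for x
  proof -
    have "inv b1 (b1 x) < inv b1 (b1 x + 1)" using aut_smono[OF aut_inv[OF b1(1)]] by simp
    then show ?thesis unfolding G_def using aut_inv_l[OF b1(1)] by simp
  qed
  have key1: "G x = y" if "q1 x = Some y" for x y
  proof -
    have xd: "x \<in> dom q1" using that by auto
    have xD: "x \<in> DR q1" and yD: "y \<in> DR q1" using that unfolding DR_def ran_def by auto
    have "phi c q1 y = phi c q1 x + 1" using phi_step[OF q1(2) xd] that by simp
    then have "b1 x + 1 = b1 y" using B1 xD yD by simp
    then show ?thesis unfolding G_def using aut_inv_l[OF b1(1)] by simp
  qed
  have key2: "G (al x) = al y" if "q2 x = Some y" for x y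
  proof -
    have xd: "x \<in> dom q2" using that by auto
    have xD: "x \<in> DR q2" and yD: "y \<in> DR q2" using that unfolding DR_def ran_def by auto
    have "phi c q2 y = phi c q2 x + 1" using phi_step[OF q2(2) xd] that by simp
    then have "b2 x + 1 = b2 y" using B2 xD yD by simp
    then show ?thesis unfolding G_def al_def using aut_inv_r[OF b1(1)] by simp
  qed
  have fix0: "al d = d" if "d \<in> DR p0" for d
  proof -
    have d1: "d \<in> DR q1" and d2: "d \<in> DR q2" using that DR_mono[OF l01] DR_mono[OF l02] by auto
    have "b2 d = b1 d" using B1[OF d1] B2[OF d2] phi_agree[OF n0 q1(2) l01 that] phi_agree[OF n0 q2(2) l02 that] by simp
    then show ?thesis unfolding al_def using aut_inv_l[OF b1(1)] by simp
  qed
  define a2 where "a2 = aut_apply al p2"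
  have a2G: "a2 z = Some w \<Longrightarrow> w = G z" for z w
  proof -
    assume a: "a2 z = Some w"
    then obtain y where y: "p2 (inv al z) = Some y" "w = al y" unfolding a2_def aut_apply_def by auto
    have "q2 (inv al z) = Some y" using map_le_SomeD[OF q2(1) y(1)] .
    then have "G (al (inv al z)) = al y" using key2 by blast
    then show "w = G z" using y(2) aut_inv_r[OF ial] by simp
  qed
  have da2: "dom a2 \<subseteq> al ` dom p2"
  proof
    fix z assume "z \<in> dom a2"
    then have "inv al z \<in> dom p2" unfolding a2_def aut_apply_def by auto
    then show "z \<in> al ` dom p2" by (rule image_eqI[rotated]) (simp add: aut_inv_r[OF ial])
  qed
  define r where "r = (\<lambda>x. if x \<in> dom p1 then p1 x else a2 x)"
  have rG: "r x = Some y \<Longrightarrow> y = G x" for x y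
  proof -
    assume a: "r x = Some y"
    show "y = G x"
    proof (cases "x \<in> dom p1")
      case True
      then have "p1 x = Some y" using a unfolding r_def by simp
      then have "q1 x = Some y" using map_le_SomeD[OF q1(1)] by blast
      then show ?thesis using key1 by simp
    next
      case False
      then show ?thesis using a a2G unfolding r_def by simp
    qed
  qed
  have dr: "dom r \<subseteq> dom p1 \<union> dom a2"
  proof
    fix x assume "x \<in> dom r" then show "x \<in> dom p1 \<union> dom a2" unfolding r_def by (cases "x \<in> dom p1") (auto simp: domIff)
  qed
  have fdr: "finite (dom r)"
  proof -
    have "finite (dom p1)" "finite (dom p2)" using f1 f2 unfolding fin_piso_def by auto
    then have fu: "finite (dom p1 \<union> al ` dom p2)" by simp
    have "dom r \<subseteq> dom p1 \<union> al ` dom p2" using dr da2 by blast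
    then show ?thesis using fu by (rule finite_subset)
  qed
  have rthe: "x \<in> dom r \<Longrightarrow> the (r x) = G x" for x using rG by auto
  have fr: "fin_piso r" unfolding fin_piso_def using fdr rthe Gmono by auto
  have ir: "incr r" unfolding incr_def using rthe Ginc by auto
  obtain p3 where p3: "goodp p3" "r \<subseteq>\<^sub>m p3" using cofinal_plus[OF fr ir] by blast
  have "p1 \<subseteq>\<^sub>m r" unfolding map_le_def r_def by auto
  moreover have "a2 \<subseteq>\<^sub>m r" unfolding map_le_def
  proof
    fix z assume z: "z \<in> dom a2"
    show "a2 z = r z"
    proof (cases "z \<in> dom p1")
      case True
      then obtain y where y: "p1 z = Some y" by auto
      obtain w where w: "a2 z = Some w" using z by auto
      have rz: "r z = Some y" using y True unfolding r_def by simp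
      have "y = G z" using rG[OF rz] .
      moreover have "w = G z" using a2G[OF w] .
      ultimately show ?thesis using rz w by simp
    next
      case False then show ?thesis unfolding r_def by simp
    qed
  qed
  ultimately have "p1 \<subseteq>\<^sub>m p3" "a2 \<subseteq>\<^sub>m p3" using p3(2) map_le_trans by blast+
  then show ?thesis using p3(1) ial fix0 unfolding a2_def by blast
qed



definition Nm :: "pmap \<Rightarrow> pmap" where "Nm p = (\<lambda>z. map_option uminus (p (- z)))"

lemma Nm_Nm: "Nm (Nm p) = p"
  unfolding Nm_def by (rule ext) (simp add: option.map_comp comp_def option.map_ident)

lemma dom_Nm: "dom (Nm p) = uminus ` dom p"
  unfolding Nm_def dom_def by (auto simp: image_iff) (metis minus_minus)

lemma ran_Nm: "ran (Nm p) = uminus ` ran p"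
  unfolding Nm_def ran_def by (auto simp: image_iff) (metis minus_minus)

lemma DR_Nm: "DR (Nm p) = uminus ` DR p"
  unfolding DR_def by (simp add: dom_Nm ran_Nm image_Un)

lemma img_diff: "uminus ` (A - B) = uminus ` A - uminus ` (B::rat set)"
  by (rule image_set_diff) (simp add: inj_def)

lemma ends_Nm: "ends (Nm p) = uminus ` ends p"
  unfolding ends_def by (simp add: DR_Nm dom_Nm img_diff)
lemma starts_Nm: "starts (Nm p) = uminus ` starts p"
  unfolding starts_def by (simp add: DR_Nm ran_Nm img_diff)

lemma Nm_app: "Nm p x = map_option uminus (p (- x))" unfolding Nm_def by simp

lemma fin_Nm: assumes f: "fin_piso p" shows "fin_piso (Nm p)"
  unfolding fin_piso_def
proof (intro conjI ballI impI)
  show "finite (dom (Nm p))" using f unfolding fin_piso_def dom_Nm by simp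
next
  fix x y assume x: "x \<in> dom (Nm p)" and y: "y \<in> dom (Nm p)" and xy: "x < y"
  then have "-x \<in> dom p" "-y \<in> dom p" unfolding dom_Nm by auto
  moreover have "-y < -x" using xy by simp
  ultimately have "the (p (-y)) < the (p (-x))" using f unfolding fin_piso_def by blast
  then show "the (Nm p x) < the (Nm p y)" using \<open>-x \<in> dom p\<close> \<open>-y \<in> dom p\<close> unfolding Nm_def by auto
qed

lemma decr_Nm: assumes "decr p" shows "incr (Nm p)"
  unfolding incr_def
proof
  fix x assume "x \<in> dom (Nm p)"
  then have d: "-x \<in> dom p" unfolding dom_Nm by auto
  then have "the (p (-x)) < -x" using assms unfolding decr_def by auto
  then show "x < the (Nm p x)" using d unfolding Nm_def by auto
qed

lemma incr_Nm: assumes "incr p" shows "decr (Nm p)"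
  unfolding decr_def
proof
  fix x assume "x \<in> dom (Nm p)"
  then have d: "-x \<in> dom p" unfolding dom_Nm by auto
  then have "-x < the (p (-x))" using assms unfolding incr_def by auto
  then show "the (Nm p x) < x" using d unfolding Nm_def by auto
qed

lemma goodm_Nm: assumes "goodm p" shows "goodp (Nm p)"
proof -
  have f: "fin_piso p" and d: "decr p" and ne: "DR p \<noteq> {}" and g: "\<forall>a\<in>ends p. \<forall>b\<in>starts p. a < b"
    using assms unfolding goodm_def by auto
  have "\<forall>a\<in>ends (Nm p). \<forall>b\<in>starts (Nm p). b < a" unfolding ends_Nm starts_Nm using g by auto
  then show ?thesis unfolding goodp_def using fin_Nm[OF f] decr_Nm[OF d] ne by (auto simp: DR_Nm)
qed

lemma goodp_Nm: assumes "goodp p" shows "goodm (Nm p)"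
proof -
  have f: "fin_piso p" and d: "incr p" and ne: "DR p \<noteq> {}" and g: "\<forall>a\<in>ends p. \<forall>b\<in>starts p. b < a"
    using assms unfolding goodp_def by auto
  have "\<forall>a\<in>ends (Nm p). \<forall>b\<in>starts (Nm p). a < b" unfolding ends_Nm starts_Nm using g by auto
  then show ?thesis unfolding goodm_def using fin_Nm[OF f] incr_Nm[OF d] ne by (auto simp: DR_Nm)
qed

lemma Nm_le: "p \<subseteq>\<^sub>m q \<Longrightarrow> Nm p \<subseteq>\<^sub>m Nm q"
  unfolding map_le_def Nm_def dom_def by auto

definition cj :: "(rat \<Rightarrow> rat) \<Rightarrow> rat \<Rightarrow> rat" where "cj a = (\<lambda>x. - a (- x))"

lemma cj_aut: assumes a: "is_aut a" shows "is_aut (cj a)"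
proof -
  have "cj (inv a) \<circ> cj a = id" unfolding cj_def using aut_inv_l[OF a] by (auto simp: comp_def)
  moreover have "cj a \<circ> cj (inv a) = id" unfolding cj_def using aut_inv_r[OF a] by (auto simp: comp_def)
  ultimately have "bij (cj a)" using o_bij by blast
  moreover have "strict_mono (cj a)" unfolding cj_def strict_mono_def using aut_smono[OF a] by simp
  ultimately show ?thesis unfolding is_aut_def by simp
qed

lemma cj_inv: assumes a: "is_aut a" shows "inv (cj a) = cj (inv a)"
  by (rule inv_equality) (simp_all add: cj_def aut_inv_l[OF a] aut_inv_r[OF a])

lemma Nm_aut: assumes a: "is_aut a" shows "Nm (aut_apply a (Nm p)) = aut_apply (cj a) p"
  unfolding aut_apply_def Nm_def cj_inv[OF a]
  by (rule ext) (simp add: option.map_comp comp_def cj_def)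

lemma amalg_minus:
  assumes g0: "goodm p0" and g1: "goodm p1" and g2: "goodm p2"
    and l1: "p0 \<subseteq>\<^sub>m p1" and l2: "p0 \<subseteq>\<^sub>m p2"
  shows "\<exists>p3. goodm p3 \<and> (\<exists>\<alpha>. is_aut \<alpha> \<and> (\<forall>x\<in>DR p0. \<alpha> x = x) \<and> p1 \<subseteq>\<^sub>m p3 \<and> aut_apply \<alpha> p2 \<subseteq>\<^sub>m p3)"
proof -
  obtain p3 a where p3: "goodp p3" "is_aut a" "\<forall>x\<in>DR (Nm p0). a x = x" "Nm p1 \<subseteq>\<^sub>m p3"
      "aut_apply a (Nm p2) \<subseteq>\<^sub>m p3"
    using amalg_plus[OF goodm_Nm[OF g0] goodm_Nm[OF g1] goodm_Nm[OF g2] Nm_le[OF l1] Nm_le[OF l2]] by blast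
  have "p1 \<subseteq>\<^sub>m Nm p3" using Nm_le[OF p3(4)] Nm_Nm by simp
  moreover have "aut_apply (cj a) p2 \<subseteq>\<^sub>m Nm p3" using Nm_le[OF p3(5)] Nm_aut[OF p3(2)] by simp
  moreover have "\<forall>x\<in>DR p0. cj a x = x"
  proof
    fix x assume "x \<in> DR p0"
    then have "-x \<in> DR (Nm p0)" unfolding DR_Nm by auto
    then show "cj a x = x" using p3(3) unfolding cj_def by simp
  qed
  ultimately show ?thesis using goodp_Nm[OF p3(1)] cj_aut[OF p3(2)] by blast
qed

lemma cofinal_minus:
  assumes f: "fin_piso p" and d: "decr p"
  shows "\<exists>q. goodm q \<and> p \<subseteq>\<^sub>m q"
proof -
  obtain q where q: "goodp q" "Nm p \<subseteq>\<^sub>m q" using cofinal_plus[OF fin_Nm[OF f] decr_Nm[OF d]] by blast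
  have "p \<subseteq>\<^sub>m Nm q" using Nm_le[OF q(2)] Nm_Nm by simp
  then show ?thesis using goodp_Nm[OF q(1)] by blast
qed

theorem proposition4p1:
  shows "cofinal_in Pplus_gd Pplus \<and> amalgamation Pplus_gd \<and>
         cofinal_in Pminus_gd Pminus \<and> amalgamation Pminus_gd"
proof (intro conjI)
  show "cofinal_in Pplus_gd Pplus"
    unfolding cofinal_in_def
  proof (intro conjI ballI)
    show "Pplus_gd \<subseteq> Pplus" unfolding Pgd_def by auto
  next
    fix p assume "p \<in> Pplus"
    then obtain q where "goodp q" "p \<subseteq>\<^sub>m q" using Psgn1 cofinal_plus by blast
    then show "\<exists>q\<in>Pplus_gd. p \<subseteq>\<^sub>m q" using Pgd1 by blast
  qed
next
  show "amalgamation Pplus_gd"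
    unfolding amalgamation_def
  proof (intro ballI impI)
    fix p0 p1 p2 assume a: "p0 \<in> Pplus_gd" "p1 \<in> Pplus_gd" "p2 \<in> Pplus_gd" "p0 \<subseteq>\<^sub>m p1 \<and> p0 \<subseteq>\<^sub>m p2"
    have g: "goodp p0" "goodp p1" "goodp p2" using a(1-3) Pgd1 by auto
    obtain p3 al where p3: "goodp p3" "is_aut al" "\<forall>x\<in>DR p0. al x = x" "p1 \<subseteq>\<^sub>m p3" "aut_apply al p2 \<subseteq>\<^sub>m p3"
      using amalg_plus[OF g] a(4) by blast
    have "p3 \<in> Pplus_gd" using p3(1) Pgd1 by blast
    then show "\<exists>p3\<in>Pplus_gd. \<exists>\<alpha>. is_aut \<alpha> \<and> (\<forall>x\<in>DR p0. \<alpha> x = x) \<and> p1 \<subseteq>\<^sub>m p3 \<and> aut_apply \<alpha> p2 \<subseteq>\<^sub>m p3"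
      using p3 by blast
  qed
next
  show "cofinal_in Pminus_gd Pminus"
    unfolding cofinal_in_def
  proof (intro conjI ballI)
    show "Pminus_gd \<subseteq> Pminus" unfolding Pgd_def by auto
  next
    fix p assume "p \<in> Pminus"
    then obtain q where "goodm q" "p \<subseteq>\<^sub>m q" using Psgnm cofinal_minus by blast
    then show "\<exists>q\<in>Pminus_gd. p \<subseteq>\<^sub>m q" using Pgdm by blast
  qed
next
  show "amalgamation Pminus_gd"
    unfolding amalgamation_def
  proof (intro ballI impI)
    fix p0 p1 p2 assume a: "p0 \<in> Pminus_gd" "p1 \<in> Pminus_gd" "p2 \<in> Pminus_gd" "p0 \<subseteq>\<^sub>m p1 \<and> p0 \<subseteq>\<^sub>m p2"
    have g: "goodm p0" "goodm p1" "goodm p2" using a(1-3) Pgdm by auto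
    obtain p3 al where p3: "goodm p3" "is_aut al" "\<forall>x\<in>DR p0. al x = x" "p1 \<subseteq>\<^sub>m p3" "aut_apply al p2 \<subseteq>\<^sub>m p3"
      using amalg_minus[OF g] a(4) by blast
    have "p3 \<in> Pminus_gd" using p3(1) Pgdm by blast
    then show "\<exists>p3\<in>Pminus_gd. \<exists>\<alpha>. is_aut \<alpha> \<and> (\<forall>x\<in>DR p0. \<alpha> x = x) \<and> p1 \<subseteq>\<^sub>m p3 \<and> aut_apply \<alpha> p2 \<subseteq>\<^sub>m p3"
      using p3 by blast
  qed
qed

end
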